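(* Let $11/5\le\gamma\le9$ and consider the SIEMS7 method ($\mathrm{k}=7$) with coefficients defined as in the context. Then $\sigma_{\mathrm{F}}=1$, $\sigma_{\mathrm{E}}=\dfrac{|c(\pi)|}{|a(\pi)|}$, $$\lambda_{\mathrm{I}}=\frac{105(1-2\gamma)^6}{16(420\gamma^6-1050\gamma^4+1400\gamma^3-840\gamma^2+252\gamma-31)},$$ so that $\mathfrak{I}_{\mathrm{IE}}=\dfrac{(1-2\gamma)^6}{64\gamma^6+192\gamma^5-240\gamma^4+160\gamma^3-60\gamma^2+12\gamma-1}$.
   Context: The $\gamma$-parameterized SIEMS-$\mathrm{k}$ method has coefficients $a_j$ ($0\le j\le\mathrm{k}-1$), $b_j$ ($0\le j\le\mathrm{k}$), $c_j$ ($0\le j\le\mathrm{k}-1$) determined by the polynomial identities (in $\zeta$) $\sum_{j=0}^{\mathrm{k}-1}a_j\zeta^{\mathrm{k}-j-1}=\sum_{j=1}^{\mathrm{k}}\frac{f^{(j)}(1)}{j!}(\zeta-1)^{j-1}$ with $f(z)=(\gamma z-\gamma+1)^{\mathrm{k}-1}z\ln z$; $\sum_{j=0}^{\mathrm{k}}b_j\zeta^{\mathrm{k}-j}=\zeta(\gamma\zeta-\gamma+1)^{\mathrm{k}-1}$; $\sum_{j=0}^{\mathrm{k}-1}c_j\zeta^{\mathrm{k}-j-1}=\zeta(\gamma\zeta-\gamma+1)^{\mathrm{k}-1}-\gamma^{\mathrm{k}-1}(\zeta-1)^{\mathrm{k}}$. Define $a(\theta)=\sum_j a_je^{\imath j\theta}$,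 $b(\theta)=\sum_j b_je^{\imath j\theta}$, $c(\theta)=\sum_jc_je^{\imath j\theta}$, $\sigma_{\mathrm{F}}=\max_{\theta\in[0,2\pi)}|1/a(\theta)|$, $\sigma_{\mathrm{E}}=\max_{\theta\in[0,2\pi)}|c(\theta)/a(\theta)|$, $\lambda_{\mathrm{I}}=\min_{\theta\in[0,2\pi)}\Re[b(\theta)/a(\theta)]$, $\mathfrak{I}_{\mathrm{IE}}=\lambda_{\mathrm{I}}/\sigma_{\mathrm{E}}$. *)

theory Defs
  imports "HOL-Analysis.Analysis" "HOL-Computational_Algebra.Polynomial"
begin

definition siems_f :: "nat \<Rightarrow> real \<Rightarrow> real \<Rightarrow> real" where
  "siems_f k \<gamma> z = (\<gamma> * z - \<gamma> + 1) ^ (k - 1) * z * ln z"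

definition siems_A :: "nat \<Rightarrow> real \<Rightarrow> real poly" where
  "siems_A k \<gamma> = (\<Sum>j=1..k. smult (((deriv ^^ j) (siems_f k \<gamma>) 1) / fact j) ([:-1, 1:] ^ (j - 1)))"

definition siems_B :: "nat \<Rightarrow> real \<Rightarrow> real poly" where
  "siems_B k \<gamma> = [:0, 1:] * [:1 - \<gamma>, \<gamma>:] ^ (k - 1)"

definition siems_C :: "nat \<Rightarrow> real \<Rightarrow> real poly" where
  "siems_C k \<gamma> = siems_B k \<gamma> - smult (\<gamma> ^ (k - 1)) ([:-1, 1:] ^ k)"

definition siems_a :: "nat \<Rightarrow> real \<Rightarrow> nat \<Rightarrow> real" where
  "siems_a k \<gamma> j = coeff (siems_A k \<gamma>) (k - j - 1)"

definition siems_b :: "nat \<Rightarrow> real \<Rightarrow> nat \<Rightarrow> real" where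
  "siems_b k \<gamma> j = coeff (siems_B k \<gamma>) (k - j)"

definition siems_c :: "nat \<Rightarrow> real \<Rightarrow> nat \<Rightarrow> real" where
  "siems_c k \<gamma> j = coeff (siems_C k \<gamma>) (k - j - 1)"

definition a_fun :: "nat \<Rightarrow> real \<Rightarrow> real \<Rightarrow> complex" where
  "a_fun k \<gamma> \<theta> = (\<Sum>j<k. of_real (siems_a k \<gamma> j) * cis (real j * \<theta>))"

definition b_fun :: "nat \<Rightarrow> real \<Rightarrow> real \<Rightarrow> complex" where
  "b_fun k \<gamma> \<theta> = (\<Sum>j\<le>k. of_real (siems_b k \<gamma> j) * cis (real j * \<theta>))"

definition c_fun :: "nat \<Rightarrow> real \<Rightarrow> real \<Rightarrow> complex" where
  "c_fun k \<gamma> \<theta> = (\<Sum>j<k. of_real (siems_c k \<gamma> j) * cis (real j * \<theta>))"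

definition sigma_F :: "nat \<Rightarrow> real \<Rightarrow> real" where
  "sigma_F k \<gamma> = (SUP \<theta>\<in>{0..<2*pi}. cmod (1 / a_fun k \<gamma> \<theta>))"

definition sigma_E :: "nat \<Rightarrow> real \<Rightarrow> real" where
  "sigma_E k \<gamma> = (SUP \<theta>\<in>{0..<2*pi}. cmod (c_fun k \<gamma> \<theta> / a_fun k \<gamma> \<theta>))"

definition lambda_I :: "nat \<Rightarrow> real \<Rightarrow> real" where
  "lambda_I k \<gamma> = (INF \<theta>\<in>{0..<2*pi}. Re (b_fun k \<gamma> \<theta> / a_fun k \<gamma> \<theta>))"

definition I_IE :: "nat \<Rightarrow> real \<Rightarrow> real" where
  "I_IE k \<gamma> = lambda_I k \<gamma> / sigma_E k \<gamma>"

end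

theory Submission
  imports Defs
begin


fun Rp :: "real poly \<Rightarrow> nat \<Rightarrow> real poly" where
  "Rp p 0 = 0"
| "Rp p (Suc j) = monom 1 j * (pderiv^^j) p + [:0,1:] * pderiv (Rp p j) - smult (of_nat j) (Rp p j)"

lemma deriv_step:
  fixes z :: real
  assumes z: "z > 0"
  shows "((\<lambda>z. poly P z * ln z + poly R z / z^j) has_field_derivative
     (poly (pderiv P) z * ln z + poly (monom 1 j * P + [:0,1:] * pderiv R - smult (of_nat j) R) z / z^Suc j)) (at z)"
proof -
  have zj: "z^j \<noteq> 0" using z by simp
  have d: "((\<lambda>z. poly P z * ln z + poly R z / z^j) has_field_derivative
     ((poly (pderiv P) z * ln z + inverse z * poly P z) + (poly (pderiv R) z * z^j - poly R z * (real j * z^(j - Suc 0))) / (z^j * z^j))) (at z)"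
    by (intro DERIV_add DERIV_mult DERIV_divide poly_DERIV DERIV_ln[OF z] DERIV_pow zj)
  show ?thesis
  proof (rule DERIV_cong[OF d])
    show "poly (pderiv P) z * ln z + inverse z * poly P z + (poly (pderiv R) z * z^j - poly R z * (real j * z^(j - Suc 0))) / (z^j * z^j) =
      poly (pderiv P) z * ln z + poly (monom 1 j * P + [:0,1:] * pderiv R - smult (of_nat j) R) z / z^Suc j"
      using z by (cases j) (simp_all add: field_simps poly_monom power_Suc)
  qed
qed

lemma deriv_iter:
  "z > 0 \<Longrightarrow> (deriv^^j) (\<lambda>z. poly p z * ln z) z = poly ((pderiv^^j) p) z * ln z + poly (Rp p j) z / z^j"
proof (induction j arbitrary: z)
  case 0 then show ?case by simp
next
  case (Suc j)
  have "((deriv^^j) (\<lambda>z. poly p z * ln z) has_field_derivative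
     (poly (pderiv ((pderiv^^j) p)) z * ln z + poly (Rp p (Suc j)) z / z^Suc j)) (at z)"
    apply (rule has_field_derivative_transform_within_open[where S="{0<..}"])
       apply (simp only: Rp.simps)
       apply (rule deriv_step[OF Suc.prems])
    using Suc.prems Suc.IH by auto
  then show ?case by (simp add: DERIV_imp_deriv)
qed

lemma deriv_at1: "(deriv^^j) (\<lambda>z. poly p z * ln z) 1 = poly (Rp p j) 1"
  using deriv_iter[of 1 j p] by simp




lemma B7: "siems_B 7 g = [:0, (1-g)^6, 6*g*(1-g)^5, 15*g^2*(1-g)^4, 20*g^3*(1-g)^3, 15*g^4*(1-g)^2, 6*g^5*(1-g), g^6:]"
  unfolding siems_B_def by (simp add: numeral_eq_Suc algebra_simps)

lemma D1: "poly (Rp (siems_B 7 g) 1) 1 = (1)"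
  unfolding B7 by (simp add: numeral_eq_Suc monom_Suc pderiv_pCons) algebra

lemma D2: "poly (Rp (siems_B 7 g) 2) 1 = (1 + 12*g)"
  unfolding B7 by (simp add: numeral_eq_Suc monom_Suc pderiv_pCons) algebra

lemma D3: "poly (Rp (siems_B 7 g) 3) 1 = (-1 + 18*g + 90*g^2)"
  unfolding B7 by (simp add: numeral_eq_Suc monom_Suc pderiv_pCons) algebra

lemma D4: "poly (Rp (siems_B 7 g) 4) 1 = (2 - 24*g + 180*g^2 + 480*g^3)"
  unfolding B7 by (simp add: numeral_eq_Suc monom_Suc pderiv_pCons) algebra

lemma D5: "poly (Rp (siems_B 7 g) 5) 1 = (-6 + 60*g - 300*g^2 + 1200*g^3 + 1800*g^4)"
  unfolding B7 by (simp add: numeral_eq_Suc monom_Suc pderiv_pCons) algebra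

lemma D6: "poly (Rp (siems_B 7 g) 6) 1 = (24 - 216*g + 900*g^2 - 2400*g^3 + 5400*g^4 + 4320*g^5)"
  unfolding B7 by (simp add: numeral_eq_Suc monom_Suc pderiv_pCons) algebra

lemma D7: "poly (Rp (siems_B 7 g) 7) 1 = (-120 + 1008*g - 3780*g^2 + 8400*g^3 - 12600*g^4 + 15120*g^5 + 5040*g^6)"
  unfolding B7 by (simp add: numeral_eq_Suc monom_Suc pderiv_pCons) algebra


lemma sum7: "(\<Sum>j=(1::nat)..7. h j) = h 1 + h 2 + h 3 + h 4 + h 5 + h 6 + (h 7 :: 'a :: comm_monoid_add)"
proof -
  have "{1..7::nat} = {1,2,3,4,5,6,7}" by auto
  then show ?thesis by (simp add: add.assoc)
qed

lemma f7: "siems_f 7 g = (\<lambda>z. poly (siems_B 7 g) z * ln z)"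
  by (rule ext) (simp add: siems_f_def siems_B_def algebra_simps)

lemma A7: "siems_A 7 g = [:(1/7 - g + 3*g^2 - 5*g^3 + 5*g^4 - 3*g^5 + g^6), (223/140 - 77/10*g + 53/4*g^2 - 20/3*g^3 - 15/2*g^4 + 12*g^5 - 6*g^6), (-197/140 + 15*g - 185/4*g^2 + 175/3*g^3 - 45/2*g^4 - 15*g^5 + 15*g^6), (153/140 - 10*g + 45*g^2 - 260/3*g^3 + 65*g^4 - 20*g^6), (-241/420 + 5*g - 20*g^2 + 155/3*g^3 - 60*g^4 + 15*g^5 + 15*g^6), (37/210 - 3/2*g + 23/4*g^2 - 40/3*g^3 + 45/2*g^4 - 12*g^5 - 6*g^6), (-1/42 + 1/5*g - 3/4*g^2 + 5/3*g^3 - 5/2*g^4 + 3*g^5 + g^6):]"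
proof -
  have e: "(deriv ^^ j) (siems_f 7 g) 1 = poly (Rp (siems_B 7 g) j) 1" for j
    unfolding f7 by (rule deriv_at1)
  show ?thesis
    unfolding siems_A_def e sum7 D1 D2 D3 D4 D5 D6 D7
    by (simp add: numeral_eq_Suc fact_numeral) (simp add: field_simps)
qed

lemma C7: "siems_C 7 g = [:(g^6), (1 - 6*g + 15*g^2 - 20*g^3 + 15*g^4 - 6*g^5 - 6*g^6), (6*g - 30*g^2 + 60*g^3 - 60*g^4 + 30*g^5 + 15*g^6), (15*g^2 - 60*g^3 + 90*g^4 - 60*g^5 - 20*g^6), (20*g^3 - 60*g^4 + 60*g^5 + 15*g^6), (15*g^4 - 30*g^5 - 6*g^6), (6*g^5 + g^6):]"
  unfolding siems_C_def B7 by (simp add: numeral_eq_Suc) (simp add: algebra_simps)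

lemma a0: "siems_a 7 g 0 = (-1/42 + 1/5*g - 3/4*g^2 + 5/3*g^3 - 5/2*g^4 + 3*g^5 + g^6)"
  unfolding siems_a_def A7 by (simp add: numeral_eq_Suc)

lemma a1: "siems_a 7 g 1 = (37/210 - 3/2*g + 23/4*g^2 - 40/3*g^3 + 45/2*g^4 - 12*g^5 - 6*g^6)"
  unfolding siems_a_def A7 by (simp add: numeral_eq_Suc)

lemma a2: "siems_a 7 g 2 = (-241/420 + 5*g - 20*g^2 + 155/3*g^3 - 60*g^4 + 15*g^5 + 15*g^6)"
  unfolding siems_a_def A7 by (simp add: numeral_eq_Suc)

lemma a3: "siems_a 7 g 3 = (153/140 - 10*g + 45*g^2 - 260/3*g^3 + 65*g^4 - 20*g^6)"
  unfolding siems_a_def A7 by (simp add: numeral_eq_Suc)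

lemma a4: "siems_a 7 g 4 = (-197/140 + 15*g - 185/4*g^2 + 175/3*g^3 - 45/2*g^4 - 15*g^5 + 15*g^6)"
  unfolding siems_a_def A7 by (simp add: numeral_eq_Suc)

lemma a5: "siems_a 7 g 5 = (223/140 - 77/10*g + 53/4*g^2 - 20/3*g^3 - 15/2*g^4 + 12*g^5 - 6*g^6)"
  unfolding siems_a_def A7 by (simp add: numeral_eq_Suc)

lemma a6: "siems_a 7 g 6 = (1/7 - g + 3*g^2 - 5*g^3 + 5*g^4 - 3*g^5 + g^6)"
  unfolding siems_a_def A7 by (simp add: numeral_eq_Suc)

lemma b0: "siems_b 7 g 0 = (g^6)"
  unfolding siems_b_def B7 by (simp add: numeral_eq_Suc; algebra?)

lemma b1: "siems_b 7 g 1 = (6*g^5 - 6*g^6)"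
  unfolding siems_b_def B7 by (simp add: numeral_eq_Suc; algebra?)

lemma b2: "siems_b 7 g 2 = (15*g^4 - 30*g^5 + 15*g^6)"
  unfolding siems_b_def B7 by (simp add: numeral_eq_Suc; algebra?)

lemma b3: "siems_b 7 g 3 = (20*g^3 - 60*g^4 + 60*g^5 - 20*g^6)"
  unfolding siems_b_def B7 by (simp add: numeral_eq_Suc; algebra?)

lemma b4: "siems_b 7 g 4 = (15*g^2 - 60*g^3 + 90*g^4 - 60*g^5 + 15*g^6)"
  unfolding siems_b_def B7 by (simp add: numeral_eq_Suc; algebra?)

lemma b5: "siems_b 7 g 5 = (6*g - 30*g^2 + 60*g^3 - 60*g^4 + 30*g^5 - 6*g^6)"
  unfolding siems_b_def B7 by (simp add: numeral_eq_Suc; algebra?)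

lemma b6: "siems_b 7 g 6 = (1 - 6*g + 15*g^2 - 20*g^3 + 15*g^4 - 6*g^5 + g^6)"
  unfolding siems_b_def B7 by (simp add: numeral_eq_Suc; algebra?)

lemma b7: "siems_b 7 g 7 = 0"
  unfolding siems_b_def B7 by (simp add: numeral_eq_Suc; algebra?)

lemma c0: "siems_c 7 g 0 = (6*g^5 + g^6)"
  unfolding siems_c_def C7 by (simp add: numeral_eq_Suc)

lemma c1: "siems_c 7 g 1 = (15*g^4 - 30*g^5 - 6*g^6)"
  unfolding siems_c_def C7 by (simp add: numeral_eq_Suc)

lemma c2: "siems_c 7 g 2 = (20*g^3 - 60*g^4 + 60*g^5 + 15*g^6)"
  unfolding siems_c_def C7 by (simp add: numeral_eq_Suc)

lemma c3: "siems_c 7 g 3 = (15*g^2 - 60*g^3 + 90*g^4 - 60*g^5 - 20*g^6)"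
  unfolding siems_c_def C7 by (simp add: numeral_eq_Suc)

lemma c4: "siems_c 7 g 4 = (6*g - 30*g^2 + 60*g^3 - 60*g^4 + 30*g^5 + 15*g^6)"
  unfolding siems_c_def C7 by (simp add: numeral_eq_Suc)

lemma c5: "siems_c 7 g 5 = (1 - 6*g + 15*g^2 - 20*g^3 + 15*g^4 - 6*g^5 - 6*g^6)"
  unfolding siems_c_def C7 by (simp add: numeral_eq_Suc)

lemma c6: "siems_c 7 g 6 = (g^6)"
  unfolding siems_c_def C7 by (simp add: numeral_eq_Suc)





fun Tc :: "nat \<Rightarrow> real \<Rightarrow> real" where
  "Tc 0 x = 1" | "Tc (Suc 0) x = x" | "Tc (Suc (Suc n)) x = 2*x*Tc (Suc n) x - Tc n x"

fun Uc :: "nat \<Rightarrow> real \<Rightarrow> real" where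
  "Uc 0 x = 0" | "Uc (Suc 0) x = 1" | "Uc (Suc (Suc n)) x = 2*x*Uc (Suc n) x - Uc n x"

lemma Tc_vals: "Tc 0 x = 1" "Tc 1 x = x" "Tc 2 x = 2*x^2-1" "Tc 3 x = 4*x^3-3*x"
  "Tc 4 x = 8*x^4-8*x^2+1" "Tc 5 x = 16*x^5-20*x^3+5*x" "Tc 6 x = 32*x^6-48*x^4+18*x^2-1"
  "Tc 7 x = 64*x^7-112*x^5+56*x^3-7*x"
  by (simp_all add: eval_nat_numeral algebra_simps power2_eq_square power3_eq_cube power_Suc)

lemma Uc_vals: "Uc 0 x = 0" "Uc 1 x = 1" "Uc 2 x = 2*x" "Uc 3 x = 4*x^2-1"
  "Uc 4 x = 8*x^3-4*x" "Uc 5 x = 16*x^4-12*x^2+1" "Uc 6 x = 32*x^5-32*x^3+6*x"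
  "Uc 7 x = 64*x^6-80*x^4+24*x^2-1"
  by (simp_all add: eval_nat_numeral algebra_simps power2_eq_square power3_eq_cube power_Suc)

lemma sum_lt7: "(\<Sum>j<(7::nat). h j) = h 0 + h 1 + h 2 + h 3 + h 4 + h 5 + (h 6 :: 'a :: comm_monoid_add)"
  by (simp add: eval_nat_numeral add.assoc add.commute add.left_commute)

lemma sum_le7: "(\<Sum>j\<le>(7::nat). h j) = h 0 + h 1 + h 2 + h 3 + h 4 + h 5 + h 6 + (h 7 :: 'a :: comm_monoid_add)"
  by (simp add: eval_nat_numeral add.assoc add.commute add.left_commute)

definition RA :: "real \<Rightarrow> real \<Rightarrow> real" where
  "RA s x = (-337109290 - 958461000 * s - 1067272500 * s^2 - 580300000 * s^3 - 153562500 * s^4 - 15750000 * s^5 + 1460156443 * x + 4534329240 * x * s + 5768999250 * x * s^2 + 3805970000 * x * s^3 + 1352137500 * x * s^4 + 239400000 * x * s^5 + 15750000 * x * s^6 - 1929032929 * x^2 - 6333732720 * x^2 * s - 8747529000 * x^2 * s^2 - 6444410000 * x^2 * s^3 - 2638912500 * x^2 * s^4 - 560700000 * x^2 * s^5 - 47250000 * x^2 * s^6 - 451948670 * x^3 - 1074204600 * x^3 * s - 712976250 * x^3 * s^2 + 194950000 * x^3 * s^3 + 442312500 * x^3 * s^4 + 189000000 * x^3 * s^5 + 26250000 * x^3 * s^6 + 3248296504 * x^4 + 10075617720 * x^4 * s + 12999241500 * x^4 * s^2 + 8862910000 * x^4 * s^3 + 3327975000 * x^4 * s^4 + 639450000 *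 x^4 * s^5 + 47250000 * x^4 * s^6 - 2727263632 * x^5 - 8561820960 * x^5 * s - 11330487000 * x^5 * s^2 - 8081080000 * x^5 * s^3 - 3266550000 * x^5 * s^4 - 705600000 * x^5 * s^5 - 63000000 * x^5 * s^6 + 737557824 * x^6 + 2318272320 * x^6 * s + 3090024000 * x^6 * s^2 + 2241960000 * x^6 * s^3 + 936600000 * x^6 * s^4 + 214200000 * x^6 * s^5 + 21000000 * x^6 * s^6)"

definition IA :: "real \<Rightarrow> real \<Rightarrow> real" where
  "IA s x = (211458246 + 786544080 * s + 1163578500 * s^2 + 873040000 * s^3 + 348337500 * s^4 + 69300000 * s^5 + 5250000 * s^6 - 28300493 * x - 426571740 * x * s - 1089149250 * x * s^2 - 1172220000 * x * s^3 - 623700000 * x * s^4 - 160650000 * x * s^5 - 15750000 * x * s^6 - 1815580486 * x^2 - 5355115080 * x^2 * s - 6378219750 * x^2 * s^2 - 3845590000 * x^2 * s^3 - 1190962500 * x^2 * s^4 - 163800000 * x^2 * s^5 - 5250000 * x^2 * s^6 + 3617075416 * x^3 + 11234753880 * x^3 * s + 14544253500 * x^3 * s^2 + 9983890000 * x^3 * s^3 + 3796275000 * x^3 * s^4 + 746550000 * x^3 * s^5 + 57750000 * x^3 * s^6 - 2727263632 * x^4 - 8561820960 * x^4 * s - 11330487000 * x^4 * s^2 - 8081080000 * x^4 * s^3 - 3266550000 * x^4 * s^4 - 705600000 * x^4 * s^5 - 63000000 * x^4 * s^6 + 737557824 * x^5 + 2318272320 * x^5 * s + 3090024000 * x^5 *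 s^2 + 2241960000 * x^5 * s^3 + 936600000 * x^5 * s^4 + 214200000 * x^5 * s^5 + 21000000 * x^5 * s^6)"

definition RB :: "real \<Rightarrow> real \<Rightarrow> real" where
  "RB s x = (-3828995 - 12974250 * s - 16830000 * s^2 - 10525000 * s^3 - 3187500 * s^4 - 375000 * s^5 + 8885844 * x + 36779970 * x * s + 59795250 * x * s^2 + 48960000 * x * s^3 + 21225000 * x * s^4 + 4575000 * x * s^5 + 375000 * x * s^6 - 2165832 * x^2 - 20531160 * x^2 * s - 52073250 * x^2 * s^2 - 59505000 * x^2 * s^3 - 34612500 * x^2 * s^4 - 9975000 * x^2 * s^5 - 1125000 * x^2 * s^6 - 12735360 * x^3 - 41428800 * x^3 * s - 49860000 * x^3 * s^2 - 24650000 * x^3 * s^3 - 1500000 * x^3 * s^4 + 2625000 * x^3 * s^5 + 625000 * x^3 * s^6 + 16578432 * x^4 + 68636160 * x^4 * s + 115992000 * x^4 * s^2 + 101880000 * x^4 * s^3 + 48675000 * x^4 * s^4 + 11850000 * x^4 * s^5 + 1125000 * x^4 * s^6 - 8211456 * x^5 - 37946880 * x^5 * s - 72576000 * x^5 * s^2 - 73440000 * x^5 * s^3 - 41400000 * x^5 * s^4 - 12300000 * x^5 * s^5 - 1500000 * x^5 * s^6 + 1492992 * x^6 + 7464960 * x^6 * s + 15552000 * x^6 * s^2 + 17280000 * x^6 * s^3 + 10800000 * x^6 * s^4 + 3600000 * x^6 * s^5 + 500000 * x^6 * s^6)"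

definition IB :: "real \<Rightarrow> real \<Rightarrow> real" where
  "IB s x = (-561132 + 1835490 * s + 7649250 * s^2 + 9095000 * s^3 + 4950000 * s^4 + 1275000 * s^5 + 125000 * s^6 + 6683256 * x + 16586280 * x * s + 11754750 * x * s^2 - 2085000 * x * s^3 - 6225000 * x * s^4 - 2700000 * x * s^5 - 375000 * x * s^6 - 16841088 * x^2 - 60402240 * x^2 * s - 86148000 * x^2 * s^2 - 61370000 * x^2 * s^3 - 22200000 * x^2 * s^4 - 3525000 * x^2 * s^5 - 125000 * x^2 * s^6 + 17324928 * x^3 + 72368640 * x^3 * s + 123768000 * x^3 * s^2 + 110520000 * x^3 * s^3 + 54075000 * x^3 * s^4 + 13650000 * x^3 * s^5 + 1375000 * x^3 * s^6 - 8211456 * x^4 - 37946880 * x^4 * s - 72576000 * x^4 * s^2 - 73440000 * x^4 * s^3 - 41400000 * x^4 * s^4 - 12300000 * x^4 * s^5 - 1500000 * x^4 * s^6 + 1492992 * x^5 + 7464960 * x^5 * s + 15552000 * x^5 * s^2 + 17280000 * x^5 * s^3 + 10800000 * x^5 * s^4 + 3600000 * x^5 * s^5 + 500000 * x^5 * s^6)"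

definition RC :: "real \<Rightarrow> real \<Rightarrow> real" where
  "RC s x = (-14733620 - 36816750 * s - 36273750 * s^2 - 17525000 * s^3 - 4125000 * s^4 - 375000 * s^5 + 87889189 * x + 235525470 * x * s + 258462750 * x * s^2 + 147110000 * x * s^3 + 45037500 * x * s^4 + 6825000 * x * s^5 + 375000 * x * s^6 - 149118992 * x^2 - 411980160 * x^2 * s - 473232000 * x^2 * s^2 - 287705000 * x^2 * s^3 - 96675000 * x^2 * s^4 - 16725000 * x^2 * s^5 - 1125000 * x^2 * s^6 + 8475840 * x^3 + 35251200 * x^3 * s + 59940000 * x^3 * s^2 + 53100000 * x^3 * s^3 + 25687500 * x^3 * s^4 + 6375000 * x^3 * s^5 + 625000 * x^3 * s^6 + 208481592 * x^4 + 560810160 * x^4 * s + 622557000 * x^4 * s^2 + 362580000 * x^4 * s^3 + 115425000 * x^4 * s^4 + 18600000 * x^4 * s^5 + 1125000 * x^4 * s^6 - 197668336 * x^5 - 537398880 * x^5 * s - 607146000 * x^5 * s^2 - 364040000 * x^5 * s^3 - 121650000 * x^5 * s^4 - 21300000 * x^5 * s^5 - 1500000 * x^5 * s^6 + 56689952 * x^6 + 154608960 * x^6 * s + 175692000 * x^6 * s^2 + 106480000 * x^6 * s^3 + 36300000 * x^6 * s^4 + 6600000 * x^6 * s^5 + 500000 * x^6 * s^6)"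

definition IC :: "real \<Rightarrow> real \<Rightarrow> real" where
  "IC s x = (18001483 + 51626490 * s + 60753000 * s^2 + 37145000 * s^3 + 12262500 * s^4 + 2025000 * s^5 + 125000 * s^6 - 23619464 * x - 73596720 * x * s - 96069000 * x * s^2 - 66485000 * x * s^3 - 25350000 * x * s^4 - 4950000 * x * s^5 - 375000 * x * s^6 - 90358328 * x^2 - 233448240 * x^2 * s - 243633000 * x^2 * s^2 - 128920000 * x^2 * s^3 - 35137500 * x^2 * s^4 - 4275000 * x^2 * s^5 - 125000 * x^2 * s^6 + 236826568 * x^3 + 638114640 * x^3 * s + 710403000 * x^3 * s^2 + 415820000 * x^3 * s^3 + 133575000 * x^3 * s^4 + 21900000 * x^3 * s^5 + 1375000 * x^3 * s^6 - 197668336 * x^4 - 537398880 * x^4 * s - 607146000 * x^4 * s^2 - 364040000 * x^4 * s^3 - 121650000 * x^4 * s^4 - 21300000 * x^4 * s^5 - 1500000 * x^4 * s^6 + 56689952 * x^5 + 154608960 * x^5 * s + 175692000 * x^5 * s^2 + 106480000 * x^5 * s^3 + 36300000 * x^5 * s^4 + 6600000 * x^5 * s^5 + 500000 * x^5 * s^6)"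

definition NA :: "real \<Rightarrow> real \<Rightarrow> real" where
  "NA s x = (158357263205700616 + 978854677522347360 * s + 2748970565113718400 * s^2 + 4636761752975240000 * s^3 + 5229596602948200000 * s^4 + 4152637597869600000 * s^5 + 2378795892221000000 * s^6 + 989599556190000000 * s^7 + 296420823562500000 * s^8 + 62283716250000000 * s^9 + 8708096250000000 * s^10 + 727650000000000 * s^11 + 27562500000000 * s^12 - 996433348798741496 * x - 6081058424801324160 * x * s - 16895805416426210400 * x * s^2 - 28249357940033440000 * x * s^3 - 31639509767044200000 * x * s^4 - 24991328243922600000 * x * s^5 - 14263390775326000000 * x * s^6 - 5920879854015000000 * x * s^7 - 1772212439812500000 * x * s^8 - 372572235000000000 * x * s^9 - 52165890000000000 * x * s^10 - 4365900000000000 * x * s^11 - 165375000000000 * x * s^12 + 2620894078217904490 * x^2 + 15780453317864285400 * x^2 * s + 43350249230156526000 * x^2 * s^2 + 71807159166582350000 * x^2 * s^3 + 79828513988419875000 * x^2 * s^4 + 62699691682194000000 * x^2 * s^5 + 35644029808940000000 * x^2 * s^6 + 14761852958475000000 * x^2 * s^7 + 4414853205000000000 * x^2 * s^8 + 928605431250000000 * x^2 * s^9 + 130208006250000000 * x^2 * s^10 + 10914750000000000 * x^2 * s^11 + 413437500000000 * x^2 * s^12 - 3684214292431184070 * x^3 - 21881303007840847200 * x^3 * s - 59412736135747743000 * x^3 * s^2 - 97463140890343550000 * x^3 * s^3 - 107507847269935875000 * x^3 * s^4 - 83937533403192000000 * x^3 * s^5 - 47518060420670000000 * x^3 * s^6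 - 19630604417550000000 * x^3 * s^7 - 5865704893125000000 * x^3 * s^8 - 1234373700000000000 * x^3 * s^9 - 173335050000000000 * x^3 * s^10 - 14553000000000000 * x^3 * s^11 - 551250000000000 * x^3 * s^12 + 2916510370345062240 * x^4 + 17089507862374235400 * x^4 * s + 45860670558001026000 * x^4 * s^2 + 74488796488179850000 * x^4 * s^3 + 81503632345351125000 * x^4 * s^4 + 63238168587594000000 * x^4 * s^5 + 35641971778315000000 * x^4 * s^6 + 14685500699100000000 * x^4 * s^7 + 4383807494062500000 * x^4 * s^8 + 922955118750000000 * x^4 * s^9 + 129794568750000000 * x^4 * s^10 + 10914750000000000 * x^4 * s^11 + 413437500000000 * x^4 * s^12 - 1231914712309467696 * x^5 - 7124738342716784160 * x^5 * s - 18898920769967435400 * x^5 * s^2 - 30390587789342690000 * x^5 * s^3 - 32977809617042325000 * x^5 * s^4 - 25421688061992600000 * x^5 * s^5 - 14261703007076000000 * x^5 * s^6 - 5859798046515000000 * x^5 * s^7 - 1747375871062500000 * x^5 * s^8 - 368051985000000000 * x^5 * s^9 - 51835140000000000 * x^5 * s^10 - 4365900000000000 * x^5 * s^11 - 165375000000000 * x^5 * s^12 + 216801072434788416 * x^6 + 1238283917598087360 * x^6 * s + 3247571968870118400 * x^6 * s^2 + 5170369211982240000 * x^6 * s^3 + 5563423717303200000 * x^6 * s^4 + 4260051841449600000 * x^6 * s^5 + 2378356723596000000 * x^6 * s^6 + 974329104315000000 * x^6 * s^7 + 290211681375000000 * x^6 * s^8 + 61153653750000000 * x^6 * s^9 +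 8625408750000000 * x^6 * s^10 + 727650000000000 * x^6 * s^11 + 27562500000000 * x^6 * s^12)"

definition NC :: "real \<Rightarrow> real \<Rightarrow> real" where
  "NC s x = (541132948503689 + 2943594772439340 * s + 7276943040630600 * s^2 + 10797635017635000 * s^3 + 10695509713237500 * s^4 + 7438569383400000 * s^5 + 3717302630250000 * s^6 + 1341723960000000 * s^7 + 346153781250000 * s^8 + 62043125000000 * s^9 + 7306875000000 * s^10 + 506250000000 * s^11 + 15625000000 * s^12 - 3440222584998584 * x - 18500354400708540 * x * s - 45262645711196100 * x * s^2 - 66543943458810000 * x * s^3 - 65387612055675000 * x * s^4 - 45169555332900000 * x * s^5 - 22450139094000000 * x * s^6 - 8070267510000000 * x * s^7 - 2076603937500000 * x * s^8 - 371774375000000 * x * s^9 - 43794375000000 * x * s^10 - 3037500000000 * x * s^11 - 93750000000 * x * s^12 + 9099292547546960 * x^2 + 48403684353327600 * x^2 * s + 117250277122771500 * x^2 * s^2 + 170841961173275000 * x^2 * s^3 + 166558284657937500 * x^2 * s^4 + 114290460913500000 * x^2 * s^5 + 56496658360000000 * x^2 * s^6 + 20226321900000000 * x^2 * s^7 + 5190771562500000 * x^2 * s^8 + 928225000000000 * x^2 * s^9 + 109368750000000 * x^2 * s^10 + 7593750000000 * x^2 * s^11 + 234375000000 * x^2 * s^12 - 12816393968713280 * x^3 - 67479160420636800 * x^3 * s - 161908103051112000 * x^3 * s^2 - 233877072957700000 * x^3 * s^3 - 226265489683500000 * x^3 * s^4 - 154237279555500000 * x^3 * s^5 - 75831256042500000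 * x^3 * s^6 - 27037091700000000 * x^3 * s^7 - 6920122500000000 * x^3 * s^8 - 1236018750000000 * x^3 * s^9 - 145668750000000 * x^3 * s^10 - 10125000000000 * x^3 * s^11 - 312500000000 * x^3 * s^12 + 10138802671022960 * x^4 + 52865310335877600 * x^4 * s + 125695219247334000 * x^4 * s^2 + 180054460766400000 * x^4 * s^3 + 172890250609500000 * x^4 * s^4 + 117086085763500000 * x^4 * s^5 + 57255669453750000 * x^4 * s^6 + 20330159400000000 * x^4 * s^7 + 5189470781250000 * x^4 * s^8 + 925803125000000 * x^4 * s^9 + 109134375000000 * x^4 * s^10 + 7593750000000 * x^4 * s^11 + 234375000000 * x^4 * s^12 - 4271269192904384 * x^5 - 22067663493311040 * x^5 * s - 52015664590533600 * x^5 * s^2 - 73911640164560000 * x^5 * s^3 - 70452168801300000 * x^5 * s^4 - 47405816150400000 * x^5 * s^5 - 23057324531500000 * x^5 * s^6 - 8153337510000000 * x^5 * s^7 - 2075563312500000 * x^5 * s^8 - 369836875000000 * x^5 * s^9 - 43606875000000 * x^5 * s^10 - 3037500000000 * x^5 * s^11 - 93750000000 * x^5 * s^12 + 748657823683264 * x^6 + 3834588853011840 * x^6 * s + 8963973942105600 * x^6 * s^2 + 12638599623760000 * x^6 * s^3 + 11961225559800000 * x^6 * s^4 + 7997534978400000 * x^6 * s^5 + 3869089224000000 * x^6 * s^6 + 1362491460000000 * x^6 * s^7 + 345893625000000 * x^6 * s^8 + 61558750000000 * x^6 * s^9 + 7260000000000 * x^6 * s^10 + 506250000000 * x^6 * s^11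 + 15625000000 * x^6 * s^12)"

definition BA :: "real \<Rightarrow> real \<Rightarrow> real" where
  "BA s x = (1172133797369078 + 7990457025729480 * s + 24603712696840200 * s^2 + 45333531009870000 * s^3 + 55749313819537500 * s^4 + 48258001108050000 * s^5 + 30175875274875000 * s^6 + 13742538757500000 * s^7 + 4526147718750000 * s^8 + 1051833125000000 * s^9 + 163793437500000 * s^10 + 15356250000000 * s^11 + 656250000000 * s^12 - 7157322377788493 * x - 48270564317809380 * x * s - 147467058460741200 * x * s^2 - 270252150112095000 * x * s^3 - 331257160908787500 * x * s^4 - 286324761982050000 * x * s^5 - 179051334524250000 * x * s^6 - 81649534732500000 * x * s^7 - 26951873812500000 * x * s^8 - 6280811250000000 * x * s^9 - 980791875000000 * x * s^10 - 92137500000000 * x * s^11 - 3937500000000 * x * s^12 + 18478211824756295 * x^2 + 122659123442167200 * x^2 * s + 370469906854540500 * x^2 * s^2 + 673643936137425000 * x^2 * s^3 + 821690978852437500 * x^2 * s^4 + 708488504539500000 * x^2 * s^5 + 442826205607500000 * x^2 * s^6 + 202143553237500000 * x^2 * s^7 + 66869614218750000 * x^2 * s^8 + 15626559375000000 * x^2 * s^9 + 2447057812500000 * x^2 * s^10 + 230343750000000 * x^2 * s^11 + 9843750000000 * x^2 * s^12 - 25732467724459310 * x^3 - 167577130494227100 * x^3 * s - 499057925731929000 * x^3 * s^2 - 898555985891775000 * x^3 * s^3 - 1089106333689187500 * x^3 * s^4 - 935849686123500000 * x^3 * s^5 - 584307342060000000 * x^3 * s^6 - 266929640775000000 * x^3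 * s^7 - 88482673125000000 * x^3 * s^8 - 20734787500000000 * x^3 * s^9 - 3256181250000000 * x^3 * s^10 - 307125000000000 * x^3 * s^11 - 13125000000000 * x^3 * s^12 + 20325351979688920 * x^4 + 129638505379642200 * x^4 * s + 379980185496790500 * x^4 * s^2 + 676327060417425000 * x^4 * s^3 + 813505644982125000 * x^4 * s^4 + 695995634333250000 * x^4 * s^5 + 433840008654375000 * x^4 * s^6 + 198284868862500000 * x^4 * s^7 + 65856856406250000 * x^4 * s^8 + 15475621875000000 * x^4 * s^9 + 2437214062500000 * x^4 * s^10 + 230343750000000 * x^4 * s^11 + 9843750000000 * x^4 * s^12 - 8611954322093968 * x^5 - 53771615251226880 * x^5 * s - 154953082046416200 * x^5 * s^2 - 272302343207970000 * x^5 * s^3 - 324666282679725000 * x^5 * s^4 - 276320425192050000 * x^5 * s^5 - 171861392586750000 * x^5 * s^6 - 78562587232500000 * x^5 * s^7 - 26141667562500000 * x^5 * s^8 - 6160061250000000 * x^5 * s^9 - 972916875000000 * x^5 * s^10 - 92137500000000 * x^5 * s^11 - 3937500000000 * x^5 * s^12 + 1526057076433728 * x^6 + 9331224215724480 * x^6 * s + 26424261190915200 * x^6 * s^2 + 45805951647120000 * x^6 * s^3 + 54083839623600000 * x^6 * s^4 + 45752733316800000 * x^6 * s^5 + 28377979634250000 * x^6 * s^6 + 12970801882500000 * x^6 * s^7 + 4323596156250000 * x^6 * s^8 + 1021645625000000 * x^6 * s^9 + 161824687500000 * x^6 * s^10 + 15356250000000 * x^6 * s^11 + 656250000000 * x^6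 * s^12)"

definition DA :: "real \<Rightarrow> real" where
  "DA s = (3438767968 + 10203392640 * s + 12548928000 * s^2 + 8160320000 * s^3 + 2944200000 * s^4 + 554400000 * s^5 + 42000000 * s^6)"

definition DB :: "real \<Rightarrow> real" where
  "DB s = (24137569 + 85191420 * s + 125281500 * s^2 + 98260000 * s^3 + 43350000 * s^4 + 10200000 * s^5 + 1000000 * s^6)"

definition DC :: "real \<Rightarrow> real" where
  "DC s = (202622239 + 533244420 * s + 577486500 * s^2 + 327660000 * s^3 + 101850000 * s^4 + 16200000 * s^5 + 1000000 * s^6)"

lemma RA_sx: "656250 * (\<Sum>j<7. siems_a 7 (s+11/5) j * Tc j x) = RA s x"
  unfolding sum_lt7 a0 a1 a2 a3 a4 a5 a6 Tc_vals RA_def by algebra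

lemma IA_sx: "656250 * (\<Sum>j<7. siems_a 7 (s+11/5) j * Uc j x) = IA s x"
  unfolding sum_lt7 a0 a1 a2 a3 a4 a5 a6 Uc_vals IA_def by algebra

lemma RB_sx: "15625 * (\<Sum>j\<le>7. siems_b 7 (s+11/5) j * Tc j x) = RB s x"
  unfolding sum_le7 b0 b1 b2 b3 b4 b5 b6 b7 Tc_vals RB_def by algebra

lemma IB_sx: "15625 * (\<Sum>j\<le>7. siems_b 7 (s+11/5) j * Uc j x) = IB s x"
  unfolding sum_le7 b0 b1 b2 b3 b4 b5 b6 b7 Uc_vals IB_def by algebra

lemma RC_sx: "15625 * (\<Sum>j<7. siems_c 7 (s+11/5) j * Tc j x) = RC s x"
  unfolding sum_lt7 c0 c1 c2 c3 c4 c5 c6 Tc_vals RC_def by algebra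

lemma IC_sx: "15625 * (\<Sum>j<7. siems_c 7 (s+11/5) j * Uc j x) = IC s x"
  unfolding sum_lt7 c0 c1 c2 c3 c4 c5 c6 Uc_vals IC_def by algebra

lemma DA_eq: "RA s (-1) = DA s"
  unfolding RA_def DA_def by simp

lemma DB_eq: "RB s (-1) = DB s"
  unfolding RB_def DB_def by simp

lemma DC_eq: "RC s (-1) = DC s"
  unfolding RC_def DC_def by simp



lemma NA_eq: "RA s x^2 + (1-x^2)*IA s x^2 = NA s x"
  unfolding RA_def IA_def NA_def by algebra

lemma NC_eq: "RC s x^2 + (1-x^2)*IC s x^2 = NC s x"
  unfolding RC_def IC_def NC_def by algebra

lemma BA_eq: "RB s x * RA s x + (1-x^2)*IB s x * IA s x = BA s x"
  unfolding RA_def IA_def RB_def IB_def BA_def by algebra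

lemma F_cert1:
  assumes s: "0 \<le> s" and x0: "(-1) \<le> x" and x1: "x \<le> 0"
  shows "NA s x - 430664062500 \<ge> 0"
proof -
  have id: "1 * (NA s x - 430664062500) = (1-x) * ((5912562353539393262 + 35087099775358955520 * s + 95207462322141388800 * s^2 + 156103086619719680000 * s^3 + 172125166654022400000 * s^4 + 134350549709107200000 * s^5 + 76043154203072000000 * s^6 + 31411282318080000000 * s^7 + 9385293204000000000 * s^8 + 1974997920000000000 * s^9 + 277336080000000000 * s^10 + 23284800000000000 * s^11 + 882000000000000 * s^12) * (1 + x)^0 * (-x)^5 + (14310450014434452630 + 85630398388113343800 * s + 234012427682255397000 * s^2 + 385975256850680700000 * s^3 + 427636316935059750000 * s^4 + 335015654636628000000 * s^5 + 190111261044180000000 * s^6 + 78650369410200000000 * s^7 + 23512906147500000000 * s^8 + 4946535300000000000 * s^9 + 694001700000000000 * s^10 + 58212000000000000 * s^11 + 2205000000000000 * s^12) * (1 + x)^1 * (-x)^4 + (13861876839311787730 + 83639571407908798800 * s + 230190279652447947000 * s^2 + 381895461501493450000 * s^3 + 425100493932641625000 * s^4 + 334218055330488000000 * s^5 + 190132458493180000000 * s^6 + 78775427087700000000 * s^7 + 23562786003750000000 * s^8 + 4955575800000000000 * s^9 + 694663200000000000 * s^10 + 58212000000000000 * s^11 + 2205000000000000 * s^12) * (1 + x)^2 * (-x)^3 + (6718691952405595790 + 40875611334924689400 * s + 113280459435231186000 * s^2 + 189012565257509350000 * s^3 + 211354219510189875000 * s^4 + 166742139599049000000 * s^5 + 95085773380465000000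 * s^6 + 39451689413850000000 * s^7 + 11806436289375000000 * s^8 + 2482308150000000000 * s^9 + 347662350000000000 * s^10 + 29106000000000000 * s^11 + 1102500000000000 * s^12) * (1 + x)^3 * (-x)^2 + (1629860678965293960 + 9996477134890713600 * s + 27891687676881084000 * s^2 + 46796404951934400000 * s^3 + 52557896178837000000 * s^4 + 41601878635401000000 * s^5 + 23778574344210000000 * s^6 + 9879278078775000000 * s^7 + 2957895734062500000 * s^8 + 621707100000000000 * s^9 + 86998275000000000 * s^10 + 7276500000000000 * s^11 + 275625000000000 * s^12) * (1 + x)^4 * (-x)^1 + (158356832541638116 + 978854677522347360 * s + 2748970565113718400 * s^2 + 4636761752975240000 * s^3 + 5229596602948200000 * s^4 + 4152637597869600000 * s^5 + 2378795892221000000 * s^6 + 989599556190000000 * s^7 + 296420823562500000 * s^8 + 62283716250000000 * s^9 + 8708096250000000 * s^10 + 727650000000000 * s^11 + 27562500000000 * s^12) * (1 + x)^5 * (-x)^0)"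
    unfolding NA_def NC_def BA_def DA_def DB_def DC_def by algebra
  have h1: "0 \<le> (1 + x)" and h2: "0 \<le> (-x)" using x0 x1 by simp_all
  have bp: "0 \<le> (5912562353539393262 + 35087099775358955520 * s + 95207462322141388800 * s^2 + 156103086619719680000 * s^3 + 172125166654022400000 * s^4 + 134350549709107200000 * s^5 + 76043154203072000000 * s^6 + 31411282318080000000 * s^7 + 9385293204000000000 * s^8 + 1974997920000000000 * s^9 + 277336080000000000 * s^10 + 23284800000000000 * s^11 + 882000000000000 * s^12) * p^0 * q^5 + (14310450014434452630 + 85630398388113343800 * s + 234012427682255397000 * s^2 + 385975256850680700000 * s^3 + 427636316935059750000 * s^4 + 335015654636628000000 * s^5 + 190111261044180000000 * s^6 + 78650369410200000000 * s^7 + 23512906147500000000 * s^8 + 4946535300000000000 * s^9 + 694001700000000000 * s^10 + 58212000000000000 * s^11 + 2205000000000000 * s^12) * p^1 * q^4 + (13861876839311787730 + 83639571407908798800 * s + 230190279652447947000 * s^2 + 381895461501493450000 * s^3 + 425100493932641625000 * s^4 + 334218055330488000000 * s^5 + 190132458493180000000 * s^6 + 78775427087700000000 * s^7 + 23562786003750000000 * s^8 + 4955575800000000000 * s^9 + 694663200000000000 * s^10 + 58212000000000000 * s^11 + 2205000000000000 * s^12) * p^2 * q^3 + (6718691952405595790 + 40875611334924689400 * s + 113280459435231186000 * s^2 + 189012565257509350000 * s^3 + 211354219510189875000 * s^4 + 166742139599049000000 * s^5 + 95085773380465000000 * s^6 + 39451689413850000000 * s^7 + 11806436289375000000 * s^8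 + 2482308150000000000 * s^9 + 347662350000000000 * s^10 + 29106000000000000 * s^11 + 1102500000000000 * s^12) * p^3 * q^2 + (1629860678965293960 + 9996477134890713600 * s + 27891687676881084000 * s^2 + 46796404951934400000 * s^3 + 52557896178837000000 * s^4 + 41601878635401000000 * s^5 + 23778574344210000000 * s^6 + 9879278078775000000 * s^7 + 2957895734062500000 * s^8 + 621707100000000000 * s^9 + 86998275000000000 * s^10 + 7276500000000000 * s^11 + 275625000000000 * s^12) * p^4 * q^1 + (158356832541638116 + 978854677522347360 * s + 2748970565113718400 * s^2 + 4636761752975240000 * s^3 + 5229596602948200000 * s^4 + 4152637597869600000 * s^5 + 2378795892221000000 * s^6 + 989599556190000000 * s^7 + 296420823562500000 * s^8 + 62283716250000000 * s^9 + 8708096250000000 * s^10 + 727650000000000 * s^11 + 27562500000000 * s^12) * p^5 * q^0" if "0 \<le> p" "0 \<le> q" for p q :: real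
    using s that by (intro add_nonneg_nonneg mult_nonneg_nonneg zero_le_power; simp)
  have "(5912562353539393262 + 35087099775358955520 * s + 95207462322141388800 * s^2 + 156103086619719680000 * s^3 + 172125166654022400000 * s^4 + 134350549709107200000 * s^5 + 76043154203072000000 * s^6 + 31411282318080000000 * s^7 + 9385293204000000000 * s^8 + 1974997920000000000 * s^9 + 277336080000000000 * s^10 + 23284800000000000 * s^11 + 882000000000000 * s^12) * (1 + x)^0 * (-x)^5 + (14310450014434452630 + 85630398388113343800 * s + 234012427682255397000 * s^2 + 385975256850680700000 * s^3 + 427636316935059750000 * s^4 + 335015654636628000000 * s^5 + 190111261044180000000 * s^6 + 78650369410200000000 * s^7 + 23512906147500000000 * s^8 + 4946535300000000000 * s^9 + 694001700000000000 * s^10 + 58212000000000000 * s^11 + 2205000000000000 * s^12) * (1 + x)^1 * (-x)^4 + (13861876839311787730 + 83639571407908798800 * s + 230190279652447947000 * s^2 + 381895461501493450000 * s^3 + 425100493932641625000 * s^4 + 334218055330488000000 * s^5 + 190132458493180000000 * s^6 + 78775427087700000000 * s^7 + 23562786003750000000 * s^8 + 4955575800000000000 * s^9 + 694663200000000000 * s^10 + 58212000000000000 * s^11 + 2205000000000000 * s^12) * (1 + x)^2 * (-x)^3 + (6718691952405595790 + 40875611334924689400 * s + 113280459435231186000 * s^2 + 189012565257509350000 * s^3 + 211354219510189875000 * s^4 + 166742139599049000000 * s^5 + 95085773380465000000 * s^6 + 39451689413850000000 * s^7 + 11806436289375000000 * s^8 + 2482308150000000000 * s^9 + 347662350000000000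 * s^10 + 29106000000000000 * s^11 + 1102500000000000 * s^12) * (1 + x)^3 * (-x)^2 + (1629860678965293960 + 9996477134890713600 * s + 27891687676881084000 * s^2 + 46796404951934400000 * s^3 + 52557896178837000000 * s^4 + 41601878635401000000 * s^5 + 23778574344210000000 * s^6 + 9879278078775000000 * s^7 + 2957895734062500000 * s^8 + 621707100000000000 * s^9 + 86998275000000000 * s^10 + 7276500000000000 * s^11 + 275625000000000 * s^12) * (1 + x)^4 * (-x)^1 + (158356832541638116 + 978854677522347360 * s + 2748970565113718400 * s^2 + 4636761752975240000 * s^3 + 5229596602948200000 * s^4 + 4152637597869600000 * s^5 + 2378795892221000000 * s^6 + 989599556190000000 * s^7 + 296420823562500000 * s^8 + 62283716250000000 * s^9 + 8708096250000000 * s^10 + 727650000000000 * s^11 + 27562500000000 * s^12) * (1 + x)^5 * (-x)^0 \<ge> 0" by (rule bp[OF h1 h2])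
  moreover have "(1-x) \<ge> 0" using x0 x1 by simp
  ultimately have "1 * (NA s x - 430664062500) \<ge> 0" unfolding id by simp
  then show ?thesis by (simp add: zero_le_mult_iff)
qed

lemma F_cert2:
  assumes s: "0 \<le> s" and x0: "0 \<le> x" and x1: "x \<le> (1)"
  shows "NA s x - 430664062500 \<ge> 0"
proof -
  have id: "1 * (NA s x - 430664062500) = (1-x) * ((158356832541638116 + 978854677522347360 * s + 2748970565113718400 * s^2 + 4636761752975240000 * s^3 + 5229596602948200000 * s^4 + 4152637597869600000 * s^5 + 2378795892221000000 * s^6 + 989599556190000000 * s^7 + 296420823562500000 * s^8 + 62283716250000000 * s^9 + 8708096250000000 * s^10 + 727650000000000 * s^11 + 27562500000000 * s^12) * (x)^0 * (1 - x)^9 + (587134976617639664 + 3707488350422149440 * s + 10593900234710973600 * s^2 + 18118259589718960000 * s^3 + 20656456262437800000 * s^4 + 16535047734773400000 * s^5 + 9524568146884000000 * s^6 + 3975115707885000000 * s^7 + 1191995795812500000 * s^8 + 250264927500000000 * s^9 + 34915072500000000 * s^10 + 2910600000000000 * s^11 + 110250000000000 * s^12) * (x)^1 * (1 - x)^8 + (779051403402946246 + 5099387983157999160 * s + 14991675912437960400 * s^2 + 26217216590167190000 * s^3 + 30404773217691075000 * s^4 + 24646429391022600000 * s^5 + 14319327980951000000 * s^6 + 6005914300890000000 * s^7 + 1803878307000000000 * s^8 + 378222547500000000 * s^9 + 52579327500000000 * s^10 + 4365900000000000 * s^11 + 165375000000000 * s^12) * (x)^2 * (1 - x)^7 + (414157681553931914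 + 2906781544907449440 * s + 9016730527807098600 * s^2 + 16428656958140210000 * s^3 + 19649505377615925000 * s^4 + 16288695017498400000 * s^5 + 9607617205634000000 * s^6 + 4064491248510000000 * s^7 + 1223971741125000000 * s^8 + 255915240000000000 * s^9 + 35328510000000000 * s^10 + 2910600000000000 * s^11 + 110250000000000 * s^12) * (x)^3 * (1 - x)^6 + (66578048077818166 + 523654304070012360 * s + 1814659746228743400 * s^2 + 3621168082072240000 * s^3 + 4643559318965700000 * s^4 + 4049124929799600000 * s^5 + 2470695722971000000 * s^6 + 1065151676190000000 * s^7 + 322290986062500000 * s^8 + 66803966250000000 * s^9 + 9038846250000000 * s^10 + 727650000000000 * s^11 + 27562500000000 * s^12) * (x)^4 * (1 - x)^5 + (24035600760068450 + 68348677935510000 * s + 80700555056100000 * s^2 + 62007076680500000 * s^3 + 56088433301250000 * s^4 + 59172128295000000 * s^5 + 45855278000000000 * s^6 + 22505608125000000 * s^7 + 6725939062500000 * s^8 + 1130062500000000 * s^9 + 82687500000000 * s^10) * (x)^5 * (1 - x)^4 + (24301191327831250 + 89457870424125000 * s + 147044053012500000 * s^2 + 141455767293750000 * s^3 + 87241525546875000 * s^4 + 35425805625000000 * s^5 + 9289940625000000 * s^6 + 1447031250000000 * s^7 + 103359375000000 * s^8) * (x)^6 * (1 - x)^3 + (3251324559218750 + 9343636050000000 * s + 11496307265625000 * s^2 + 7854278906250000 * s^3 + 3146431640625000 * s^4 + 702843750000000 * s^5 + 68906250000000 * s^6) * (x)^7 * (1 - x)^2 + (305823355468750 + 624945234375000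 * s + 482516015625000 * s^2 + 175710937500000 * s^3 + 25839843750000 * s^4) * (x)^8 * (1 - x)^1 + (13715214843750 + 17571093750000 * s + 5167968750000 * s^2) * (x)^9 * (1 - x)^0)"
    unfolding NA_def NC_def BA_def DA_def DB_def DC_def by algebra
  have h1: "0 \<le> (x)" and h2: "0 \<le> (1 - x)" using x0 x1 by simp_all
  have bp: "0 \<le> (158356832541638116 + 978854677522347360 * s + 2748970565113718400 * s^2 + 4636761752975240000 * s^3 + 5229596602948200000 * s^4 + 4152637597869600000 * s^5 + 2378795892221000000 * s^6 + 989599556190000000 * s^7 + 296420823562500000 * s^8 + 62283716250000000 * s^9 + 8708096250000000 * s^10 + 727650000000000 * s^11 + 27562500000000 * s^12) * p^0 * q^9 + (587134976617639664 + 3707488350422149440 * s + 10593900234710973600 * s^2 + 18118259589718960000 * s^3 + 20656456262437800000 * s^4 + 16535047734773400000 * s^5 + 9524568146884000000 * s^6 + 3975115707885000000 * s^7 + 1191995795812500000 * s^8 + 250264927500000000 * s^9 + 34915072500000000 * s^10 + 2910600000000000 * s^11 + 110250000000000 * s^12) * p^1 * q^8 + (779051403402946246 + 5099387983157999160 * s + 14991675912437960400 * s^2 + 26217216590167190000 * s^3 + 30404773217691075000 * s^4 + 24646429391022600000 * s^5 + 14319327980951000000 * s^6 + 6005914300890000000 * s^7 + 1803878307000000000 * s^8 + 378222547500000000 * s^9 + 52579327500000000 * s^10 + 4365900000000000 * s^11 + 165375000000000 * s^12) * p^2 * q^7 + (414157681553931914 + 2906781544907449440 * s + 9016730527807098600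 * s^2 + 16428656958140210000 * s^3 + 19649505377615925000 * s^4 + 16288695017498400000 * s^5 + 9607617205634000000 * s^6 + 4064491248510000000 * s^7 + 1223971741125000000 * s^8 + 255915240000000000 * s^9 + 35328510000000000 * s^10 + 2910600000000000 * s^11 + 110250000000000 * s^12) * p^3 * q^6 + (66578048077818166 + 523654304070012360 * s + 1814659746228743400 * s^2 + 3621168082072240000 * s^3 + 4643559318965700000 * s^4 + 4049124929799600000 * s^5 + 2470695722971000000 * s^6 + 1065151676190000000 * s^7 + 322290986062500000 * s^8 + 66803966250000000 * s^9 + 9038846250000000 * s^10 + 727650000000000 * s^11 + 27562500000000 * s^12) * p^4 * q^5 + (24035600760068450 + 68348677935510000 * s + 80700555056100000 * s^2 + 62007076680500000 * s^3 + 56088433301250000 * s^4 + 59172128295000000 * s^5 + 45855278000000000 * s^6 + 22505608125000000 * s^7 + 6725939062500000 * s^8 + 1130062500000000 * s^9 + 82687500000000 * s^10) * p^5 * q^4 + (24301191327831250 + 89457870424125000 * s + 147044053012500000 * s^2 + 141455767293750000 * s^3 + 87241525546875000 * s^4 + 35425805625000000 * s^5 + 9289940625000000 * s^6 + 1447031250000000 * s^7 + 103359375000000 * s^8) * p^6 * q^3 + (3251324559218750 + 9343636050000000 * s + 11496307265625000 * s^2 + 7854278906250000 * s^3 + 3146431640625000 * s^4 + 702843750000000 * s^5 + 68906250000000 * s^6) * p^7 * q^2 + (305823355468750 + 624945234375000 * s + 482516015625000 * s^2 + 175710937500000 * s^3 + 25839843750000 * s^4) * p^8 * q^1 + (13715214843750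 + 17571093750000 * s + 5167968750000 * s^2) * p^9 * q^0" if "0 \<le> p" "0 \<le> q" for p q :: real
    using s that by (intro add_nonneg_nonneg mult_nonneg_nonneg zero_le_power; simp)
  have "(158356832541638116 + 978854677522347360 * s + 2748970565113718400 * s^2 + 4636761752975240000 * s^3 + 5229596602948200000 * s^4 + 4152637597869600000 * s^5 + 2378795892221000000 * s^6 + 989599556190000000 * s^7 + 296420823562500000 * s^8 + 62283716250000000 * s^9 + 8708096250000000 * s^10 + 727650000000000 * s^11 + 27562500000000 * s^12) * (x)^0 * (1 - x)^9 + (587134976617639664 + 3707488350422149440 * s + 10593900234710973600 * s^2 + 18118259589718960000 * s^3 + 20656456262437800000 * s^4 + 16535047734773400000 * s^5 + 9524568146884000000 * s^6 + 3975115707885000000 * s^7 + 1191995795812500000 * s^8 + 250264927500000000 * s^9 + 34915072500000000 * s^10 + 2910600000000000 * s^11 + 110250000000000 * s^12) * (x)^1 * (1 - x)^8 + (779051403402946246 + 5099387983157999160 * s + 14991675912437960400 * s^2 + 26217216590167190000 * s^3 + 30404773217691075000 * s^4 + 24646429391022600000 * s^5 + 14319327980951000000 * s^6 + 6005914300890000000 * s^7 + 1803878307000000000 * s^8 + 378222547500000000 * s^9 + 52579327500000000 * s^10 + 4365900000000000 * s^11 + 165375000000000 * s^12) * (x)^2 * (1 - x)^7 + (414157681553931914 + 2906781544907449440 * s + 9016730527807098600 * s^2 + 16428656958140210000 * s^3 + 19649505377615925000 * s^4 + 16288695017498400000 * s^5 + 9607617205634000000 * s^6 + 4064491248510000000 *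 s^7 + 1223971741125000000 * s^8 + 255915240000000000 * s^9 + 35328510000000000 * s^10 + 2910600000000000 * s^11 + 110250000000000 * s^12) * (x)^3 * (1 - x)^6 + (66578048077818166 + 523654304070012360 * s + 1814659746228743400 * s^2 + 3621168082072240000 * s^3 + 4643559318965700000 * s^4 + 4049124929799600000 * s^5 + 2470695722971000000 * s^6 + 1065151676190000000 * s^7 + 322290986062500000 * s^8 + 66803966250000000 * s^9 + 9038846250000000 * s^10 + 727650000000000 * s^11 + 27562500000000 * s^12) * (x)^4 * (1 - x)^5 + (24035600760068450 + 68348677935510000 * s + 80700555056100000 * s^2 + 62007076680500000 * s^3 + 56088433301250000 * s^4 + 59172128295000000 * s^5 + 45855278000000000 * s^6 + 22505608125000000 * s^7 + 6725939062500000 * s^8 + 1130062500000000 * s^9 + 82687500000000 * s^10) * (x)^5 * (1 - x)^4 + (24301191327831250 + 89457870424125000 * s + 147044053012500000 * s^2 + 141455767293750000 * s^3 + 87241525546875000 * s^4 + 35425805625000000 * s^5 + 9289940625000000 * s^6 + 1447031250000000 * s^7 + 103359375000000 * s^8) * (x)^6 * (1 - x)^3 + (3251324559218750 + 9343636050000000 * s + 11496307265625000 * s^2 + 7854278906250000 * s^3 + 3146431640625000 * s^4 + 702843750000000 * s^5 + 68906250000000 * s^6) * (x)^7 * (1 - x)^2 + (305823355468750 + 624945234375000 * s + 482516015625000 * s^2 + 175710937500000 * s^3 + 25839843750000 * s^4) * (x)^8 * (1 - x)^1 + (13715214843750 + 17571093750000 * s + 5167968750000 * s^2) * (x)^9 *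 (1 - x)^0 \<ge> 0" by (rule bp[OF h1 h2])
  moreover have "(1-x) \<ge> 0" using x0 x1 by simp
  ultimately have "1 * (NA s x - 430664062500) \<ge> 0" unfolding id by simp
  then show ?thesis by (simp add: zero_le_mult_iff)
qed

lemma E_cert:
  assumes s: "0 \<le> s" and x0: "(-1) \<le> x" and x1: "x \<le> (1)"
  shows "DC s^2 * NA s x - DA s^2 * NC s x \<ge> 0"
proof -
  have id: "16 * (DC s^2 * NA s x - DA s^2 * NC s x) = (1+x) * ((318980055928947506987681265453625 + 13534883616368542865216212154790000 * s + 117188928338721956083068402623250000 * s^2 + 523317552875545613080220706305000000 * s^3 + 1509395226601752231820891846612500000 * s^4 + 3111767984449228070535927254100000000 * s^5 + 4851271977344788868400647073000000000 * s^6 + 5921848532402172580562341425000000000 * s^7 + 5789274822947510266550814187500000000 * s^8 + 4600382355930065015186670000000000000 * s^9 + 2999345551457327598031545000000000000 * s^10 + 1612633021744708837431600000000000000 * s^11 + 716060138187224245655625000000000000 * s^12 + 262049666517510088350000000000000000 * s^13 + 78585731809202619750000000000000000 * s^14 + 19117584012221061500000000000000000 * s^15 + 3713362180724070000000000000000000 * s^16 + 562176255616500000000000000000000 * s^17 + 63901888697500000000000000000000 * s^18 + 5127661350000000000000000000000 * s^19 + 258806362500000000000000000000 * s^20 + 6174000000000000000000000000 * s^21) * (1 + x)^0 * (1 - x)^5 + (1196302693608973731213516143965625 + 11408076082083501951983714020875000 * s + 51610967947584940120745392314375000 * s^2 + 147203893787181892649136671850000000 * s^3 + 296672279636651583357742643250000000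 * s^4 + 448768274160101703776515398750000000 * s^5 + 528226368608075646481511318750000000 * s^6 + 494934042117337624254066375000000000 * s^7 + 374487153030005385302747812500000000 * s^8 + 230753616052354633876050000000000000 * s^9 + 116227602348712599089625000000000000 * s^10 + 47834694700866606592500000000000000 * s^11 + 16012800804656911193750000000000000 * s^12 + 4319750795370572625000000000000000 * s^13 + 924922469345686875000000000000000 * s^14 + 153507407100337500000000000000000 * s^15 + 19029721499250000000000000000000 * s^16 + 1657031591250000000000000000000 * s^17 + 90314043750000000000000000000 * s^18 + 2315250000000000000000000000 * s^19) * (1 + x)^1 * (1 - x)^4 + (117177354471629424174868111718750 + 1011998053635184411869929437500000 * s + 4107459605809411524134450156250000 * s^2 + 10404177481116403196820148437500000 * s^3 + 18417771316421266874370292968750000 * s^4 + 24176588000775318983122031250000000 * s^5 + 24363977299669414665099218750000000 * s^6 + 19248935017110077308968750000000000 * s^7 + 12067233024141429754101562500000000 * s^8 + 6035223707733410750000000000000000 * s^9 + 2407179713821302000000000000000000 * s^10 + 761018785953080156250000000000000 * s^11 + 188271908232676953125000000000000 * s^12 + 35662337043046875000000000000000 * s^13 + 4991146641796875000000000000000 * s^14 + 485916309375000000000000000000 * s^15 + 29348894531250000000000000000 * s^16 + 826875000000000000000000000 * s^17) * (1 + x)^2 * (1 - x)^3 + (7515294324270523682269199218750 + 56150071458954652615544531250000 * s + 195451688720443181856164062500000 * s^2 + 420385552833367160888320312500000 * s^3 + 624674952082606127616503906250000 * s^4 + 679122463418085222949218750000000 * s^5 + 557856542184244843613281250000000 * s^6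 + 352445261064232366406250000000000 * s^7 + 172596215090973905273437500000000 * s^8 + 65481969289629375000000000000000 * s^9 + 19078279504487109375000000000000 * s^10 + 4188837020238281250000000000000 * s^11 + 670295362187500000000000000000 * s^12 + 73716595312500000000000000000 * s^13 + 4975031250000000000000000000 * s^14 + 155039062500000000000000000 * s^15) * (1 + x)^3 * (1 - x)^2 + (258005766863887915602978515625 + 1626213768254235383074218750000 * s + 4721334124100575796132812500000 * s^2 + 8357417939357506388085937500000 * s^3 + 10059880224429160319824218750000 * s^4 + 8691713576191570722656250000000 * s^5 + 5542699921120262988281250000000 * s^6 + 2639777139066703125000000000000 * s^7 + 938244744289760742187500000000 * s^8 + 245567406410156250000000000000 * s^9 + 45951144011718750000000000000 * s^10 + 5812939863281250000000000000 * s^11 + 444739599609375000000000000 * s^12 + 15503906250000000000000000 * s^13) * (1 + x)^4 * (1 - x)^1 + (3698563000914510279541015625 + 18982925143029162451171875000 * s + 44189132181673751220703125000 * s^2 + 61550258738926733398437500000 * s^3 + 56961490549240173339843750000 * s^4 + 36746455898844726562500000000 * s^5 + 16845501378330078125000000000 * s^6 + 5481028649414062500000000000 * s^7 + 1238552968139648437500000000 * s^8 + 184758471679687500000000000 * s^9 + 16332934570312500000000000 * s^10 + 645996093750000000000000 * s^11) * (1 + x)^5 * (1 - x)^0)"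
    unfolding NA_def NC_def BA_def DA_def DB_def DC_def by algebra
  have h1: "0 \<le> (1 + x)" and h2: "0 \<le> (1 - x)" using x0 x1 by simp_all
  have bp: "0 \<le> (318980055928947506987681265453625 + 13534883616368542865216212154790000 * s + 117188928338721956083068402623250000 * s^2 + 523317552875545613080220706305000000 * s^3 + 1509395226601752231820891846612500000 * s^4 + 3111767984449228070535927254100000000 * s^5 + 4851271977344788868400647073000000000 * s^6 + 5921848532402172580562341425000000000 * s^7 + 5789274822947510266550814187500000000 * s^8 + 4600382355930065015186670000000000000 * s^9 + 2999345551457327598031545000000000000 * s^10 + 1612633021744708837431600000000000000 * s^11 + 716060138187224245655625000000000000 * s^12 + 262049666517510088350000000000000000 * s^13 + 78585731809202619750000000000000000 * s^14 + 19117584012221061500000000000000000 * s^15 + 3713362180724070000000000000000000 * s^16 + 562176255616500000000000000000000 * s^17 + 63901888697500000000000000000000 * s^18 + 5127661350000000000000000000000 * s^19 + 258806362500000000000000000000 * s^20 + 6174000000000000000000000000 * s^21) * p^0 * q^5 + (1196302693608973731213516143965625 + 11408076082083501951983714020875000 * s + 51610967947584940120745392314375000 * s^2 + 147203893787181892649136671850000000 * s^3 + 296672279636651583357742643250000000 * s^4 + 448768274160101703776515398750000000 * s^5 + 528226368608075646481511318750000000 * s^6 + 494934042117337624254066375000000000 * s^7 + 374487153030005385302747812500000000 * s^8 + 230753616052354633876050000000000000 * s^9 + 116227602348712599089625000000000000 * s^10 + 47834694700866606592500000000000000 * s^11 + 16012800804656911193750000000000000 * s^12 + 4319750795370572625000000000000000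 * s^13 + 924922469345686875000000000000000 * s^14 + 153507407100337500000000000000000 * s^15 + 19029721499250000000000000000000 * s^16 + 1657031591250000000000000000000 * s^17 + 90314043750000000000000000000 * s^18 + 2315250000000000000000000000 * s^19) * p^1 * q^4 + (117177354471629424174868111718750 + 1011998053635184411869929437500000 * s + 4107459605809411524134450156250000 * s^2 + 10404177481116403196820148437500000 * s^3 + 18417771316421266874370292968750000 * s^4 + 24176588000775318983122031250000000 * s^5 + 24363977299669414665099218750000000 * s^6 + 19248935017110077308968750000000000 * s^7 + 12067233024141429754101562500000000 * s^8 + 6035223707733410750000000000000000 * s^9 + 2407179713821302000000000000000000 * s^10 + 761018785953080156250000000000000 * s^11 + 188271908232676953125000000000000 * s^12 + 35662337043046875000000000000000 * s^13 + 4991146641796875000000000000000 * s^14 + 485916309375000000000000000000 * s^15 + 29348894531250000000000000000 * s^16 + 826875000000000000000000000 * s^17) * p^2 * q^3 + (7515294324270523682269199218750 + 56150071458954652615544531250000 * s + 195451688720443181856164062500000 * s^2 + 420385552833367160888320312500000 * s^3 + 624674952082606127616503906250000 * s^4 + 679122463418085222949218750000000 * s^5 + 557856542184244843613281250000000 * s^6 + 352445261064232366406250000000000 * s^7 + 172596215090973905273437500000000 * s^8 + 65481969289629375000000000000000 * s^9 + 19078279504487109375000000000000 * s^10 + 4188837020238281250000000000000 * s^11 + 670295362187500000000000000000 * s^12 + 73716595312500000000000000000 * s^13 + 4975031250000000000000000000 * s^14 + 155039062500000000000000000 * s^15) * p^3 * q^2 + (258005766863887915602978515625 + 1626213768254235383074218750000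 * s + 4721334124100575796132812500000 * s^2 + 8357417939357506388085937500000 * s^3 + 10059880224429160319824218750000 * s^4 + 8691713576191570722656250000000 * s^5 + 5542699921120262988281250000000 * s^6 + 2639777139066703125000000000000 * s^7 + 938244744289760742187500000000 * s^8 + 245567406410156250000000000000 * s^9 + 45951144011718750000000000000 * s^10 + 5812939863281250000000000000 * s^11 + 444739599609375000000000000 * s^12 + 15503906250000000000000000 * s^13) * p^4 * q^1 + (3698563000914510279541015625 + 18982925143029162451171875000 * s + 44189132181673751220703125000 * s^2 + 61550258738926733398437500000 * s^3 + 56961490549240173339843750000 * s^4 + 36746455898844726562500000000 * s^5 + 16845501378330078125000000000 * s^6 + 5481028649414062500000000000 * s^7 + 1238552968139648437500000000 * s^8 + 184758471679687500000000000 * s^9 + 16332934570312500000000000 * s^10 + 645996093750000000000000 * s^11) * p^5 * q^0" if "0 \<le> p" "0 \<le> q" for p q :: real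
    using s that by (intro add_nonneg_nonneg mult_nonneg_nonneg zero_le_power; simp)
  have "(318980055928947506987681265453625 + 13534883616368542865216212154790000 * s + 117188928338721956083068402623250000 * s^2 + 523317552875545613080220706305000000 * s^3 + 1509395226601752231820891846612500000 * s^4 + 3111767984449228070535927254100000000 * s^5 + 4851271977344788868400647073000000000 * s^6 + 5921848532402172580562341425000000000 * s^7 + 5789274822947510266550814187500000000 * s^8 + 4600382355930065015186670000000000000 * s^9 + 2999345551457327598031545000000000000 * s^10 + 1612633021744708837431600000000000000 * s^11 + 716060138187224245655625000000000000 * s^12 + 262049666517510088350000000000000000 * s^13 + 78585731809202619750000000000000000 * s^14 + 19117584012221061500000000000000000 * s^15 + 3713362180724070000000000000000000 * s^16 + 562176255616500000000000000000000 * s^17 + 63901888697500000000000000000000 * s^18 + 5127661350000000000000000000000 * s^19 + 258806362500000000000000000000 * s^20 + 6174000000000000000000000000 * s^21) * (1 + x)^0 * (1 - x)^5 + (1196302693608973731213516143965625 + 11408076082083501951983714020875000 * s + 51610967947584940120745392314375000 * s^2 + 147203893787181892649136671850000000 * s^3 + 296672279636651583357742643250000000 * s^4 + 448768274160101703776515398750000000 * s^5 + 528226368608075646481511318750000000 * s^6 + 494934042117337624254066375000000000 * s^7 + 374487153030005385302747812500000000 * s^8 + 230753616052354633876050000000000000 * s^9 + 116227602348712599089625000000000000 * s^10 + 47834694700866606592500000000000000 * s^11 + 16012800804656911193750000000000000 * s^12 + 4319750795370572625000000000000000 * s^13 + 924922469345686875000000000000000 * s^14 + 153507407100337500000000000000000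 * s^15 + 19029721499250000000000000000000 * s^16 + 1657031591250000000000000000000 * s^17 + 90314043750000000000000000000 * s^18 + 2315250000000000000000000000 * s^19) * (1 + x)^1 * (1 - x)^4 + (117177354471629424174868111718750 + 1011998053635184411869929437500000 * s + 4107459605809411524134450156250000 * s^2 + 10404177481116403196820148437500000 * s^3 + 18417771316421266874370292968750000 * s^4 + 24176588000775318983122031250000000 * s^5 + 24363977299669414665099218750000000 * s^6 + 19248935017110077308968750000000000 * s^7 + 12067233024141429754101562500000000 * s^8 + 6035223707733410750000000000000000 * s^9 + 2407179713821302000000000000000000 * s^10 + 761018785953080156250000000000000 * s^11 + 188271908232676953125000000000000 * s^12 + 35662337043046875000000000000000 * s^13 + 4991146641796875000000000000000 * s^14 + 485916309375000000000000000000 * s^15 + 29348894531250000000000000000 * s^16 + 826875000000000000000000000 * s^17) * (1 + x)^2 * (1 - x)^3 + (7515294324270523682269199218750 + 56150071458954652615544531250000 * s + 195451688720443181856164062500000 * s^2 + 420385552833367160888320312500000 * s^3 + 624674952082606127616503906250000 * s^4 + 679122463418085222949218750000000 * s^5 + 557856542184244843613281250000000 * s^6 + 352445261064232366406250000000000 * s^7 + 172596215090973905273437500000000 * s^8 + 65481969289629375000000000000000 * s^9 + 19078279504487109375000000000000 * s^10 + 4188837020238281250000000000000 * s^11 + 670295362187500000000000000000 * s^12 + 73716595312500000000000000000 * s^13 + 4975031250000000000000000000 * s^14 + 155039062500000000000000000 * s^15) * (1 + x)^3 * (1 - x)^2 + (258005766863887915602978515625 + 1626213768254235383074218750000 * s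 + 4721334124100575796132812500000 * s^2 + 8357417939357506388085937500000 * s^3 + 10059880224429160319824218750000 * s^4 + 8691713576191570722656250000000 * s^5 + 5542699921120262988281250000000 * s^6 + 2639777139066703125000000000000 * s^7 + 938244744289760742187500000000 * s^8 + 245567406410156250000000000000 * s^9 + 45951144011718750000000000000 * s^10 + 5812939863281250000000000000 * s^11 + 444739599609375000000000000 * s^12 + 15503906250000000000000000 * s^13) * (1 + x)^4 * (1 - x)^1 + (3698563000914510279541015625 + 18982925143029162451171875000 * s + 44189132181673751220703125000 * s^2 + 61550258738926733398437500000 * s^3 + 56961490549240173339843750000 * s^4 + 36746455898844726562500000000 * s^5 + 16845501378330078125000000000 * s^6 + 5481028649414062500000000000 * s^7 + 1238552968139648437500000000 * s^8 + 184758471679687500000000000 * s^9 + 16332934570312500000000000 * s^10 + 645996093750000000000000 * s^11) * (1 + x)^5 * (1 - x)^0 \<ge> 0" by (rule bp[OF h1 h2])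
  moreover have "(1+x) \<ge> 0" using x0 x1 by simp
  ultimately have "16 * (DC s^2 * NA s x - DA s^2 * NC s x) \<ge> 0" unfolding id by simp
  then show ?thesis by (simp add: zero_le_mult_iff)
qed

lemma I_cert:
  assumes s: "0 \<le> s" and x0: "(-1) \<le> x" and x1: "x \<le> (1)"
  shows "DA s * BA s x - DB s * NA s x \<ge> 0"
proof -
  have id: "16 * (DA s * BA s x - DB s * NA s x) = (1+x) * ((1364039214493638151400375 + 22989411806429874649387500 * s + 133279246491907972827937500 * s^2 + 423780595580304145510000000 * s^3 + 874125607466923435462500000 * s^4 + 1269921977590104030150000000 * s^5 + 1360059026105114304375000000 * s^6 + 1101968183311153200000000000 * s^7 + 684466906446154125000000000 * s^8 + 327039182476615000000000000 * s^9 + 119513923527363750000000000 * s^10 + 32864760085500000000000000 * s^11 + 6591975726875000000000000 * s^12 + 911475337500000000000000 * s^13 + 77753812500000000000000 * s^14 + 3087000000000000000000 * s^15) * (1 + x)^0 * (1 - x)^5 + (1772131786285315237884375 + 12892430472199139405062500 * s + 43451753394864264550312500 * s^2 + 89803280753061362550000000 * s^3 + 126942576472959758437500000 * s^4 + 129565977460164708750000000 * s^5 + 98210467062913865625000000 * s^6 + 55961694098123625000000000 * s^7 + 23965473571436250000000000 * s^8 + 7616436066750000000000000 * s^9 + 1745683804593750000000000 * s^10 + 273200602500000000000000 * s^11 + 26162325000000000000000 * s^12 + 1157625000000000000000 * s^13) * (1 + x)^1 * (1 - x)^4 + (184584962009941875781250 + 1161689386333648265625000 * s + 3325326406679508984375000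 * s^2 + 5715064172374648437500000 * s^3 + 6552777158376503906250000 * s^4 + 5263237291168828125000000 * s^5 + 3021990720555078125000000 * s^6 + 1240395371250000000000000 * s^7 + 356691624023437500000000 * s^8 + 68440558593750000000000 * s^9 + 7886320312500000000000 * s^10 + 413437500000000000000 * s^11) * (1 + x)^2 * (1 - x)^3 + (12199084793927363281250 + 62243325948882421875000 * s + 141320061701314453125000 * s^2 + 187409602268164062500000 * s^3 + 159986852178808593750000 * s^4 + 91180611333984375000000 * s^5 + 34695295537109375000000 * s^6 + 8499930468750000000000 * s^7 + 1216625976562500000000 * s^8 + 77519531250000000000 * s^9) * (1 + x)^3 * (1 - x)^2 + (427365199621240234375 + 1673488418416992187500 * s + 2815531042221679687500 * s^2 + 2638579036132812500000 * s^3 + 1487722902832031250000 * s^4 + 504725361328125000000 * s^5 + 95406445312500000000 * s^6 + 7751953125000000000 * s^7) * (1 + x)^4 * (1 - x)^1 + (6216405208740234375 + 16983937133789062500 * s + 18680322875976562500 * s^2 + 10339526367187500000 * s^3 + 2880065917968750000 * s^4 + 322998046875000000 * s^5) * (1 + x)^5 * (1 - x)^0)"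
    unfolding NA_def NC_def BA_def DA_def DB_def DC_def by algebra
  have h1: "0 \<le> (1 + x)" and h2: "0 \<le> (1 - x)" using x0 x1 by simp_all
  have bp: "0 \<le> (1364039214493638151400375 + 22989411806429874649387500 * s + 133279246491907972827937500 * s^2 + 423780595580304145510000000 * s^3 + 874125607466923435462500000 * s^4 + 1269921977590104030150000000 * s^5 + 1360059026105114304375000000 * s^6 + 1101968183311153200000000000 * s^7 + 684466906446154125000000000 * s^8 + 327039182476615000000000000 * s^9 + 119513923527363750000000000 * s^10 + 32864760085500000000000000 * s^11 + 6591975726875000000000000 * s^12 + 911475337500000000000000 * s^13 + 77753812500000000000000 * s^14 + 3087000000000000000000 * s^15) * p^0 * q^5 + (1772131786285315237884375 + 12892430472199139405062500 * s + 43451753394864264550312500 * s^2 + 89803280753061362550000000 * s^3 + 126942576472959758437500000 * s^4 + 129565977460164708750000000 * s^5 + 98210467062913865625000000 * s^6 + 55961694098123625000000000 * s^7 + 23965473571436250000000000 * s^8 + 7616436066750000000000000 * s^9 + 1745683804593750000000000 * s^10 + 273200602500000000000000 * s^11 + 26162325000000000000000 * s^12 + 1157625000000000000000 * s^13) * p^1 * q^4 + (184584962009941875781250 + 1161689386333648265625000 * s + 3325326406679508984375000 * s^2 + 5715064172374648437500000 * s^3 + 6552777158376503906250000 * s^4 + 5263237291168828125000000 * s^5 + 3021990720555078125000000 * s^6 + 1240395371250000000000000 * s^7 + 356691624023437500000000 * s^8 + 68440558593750000000000 * s^9 + 7886320312500000000000 * s^10 + 413437500000000000000 * s^11) * p^2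 * q^3 + (12199084793927363281250 + 62243325948882421875000 * s + 141320061701314453125000 * s^2 + 187409602268164062500000 * s^3 + 159986852178808593750000 * s^4 + 91180611333984375000000 * s^5 + 34695295537109375000000 * s^6 + 8499930468750000000000 * s^7 + 1216625976562500000000 * s^8 + 77519531250000000000 * s^9) * p^3 * q^2 + (427365199621240234375 + 1673488418416992187500 * s + 2815531042221679687500 * s^2 + 2638579036132812500000 * s^3 + 1487722902832031250000 * s^4 + 504725361328125000000 * s^5 + 95406445312500000000 * s^6 + 7751953125000000000 * s^7) * p^4 * q^1 + (6216405208740234375 + 16983937133789062500 * s + 18680322875976562500 * s^2 + 10339526367187500000 * s^3 + 2880065917968750000 * s^4 + 322998046875000000 * s^5) * p^5 * q^0" if "0 \<le> p" "0 \<le> q" for p q :: real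
    using s that by (intro add_nonneg_nonneg mult_nonneg_nonneg zero_le_power; simp)
  have "(1364039214493638151400375 + 22989411806429874649387500 * s + 133279246491907972827937500 * s^2 + 423780595580304145510000000 * s^3 + 874125607466923435462500000 * s^4 + 1269921977590104030150000000 * s^5 + 1360059026105114304375000000 * s^6 + 1101968183311153200000000000 * s^7 + 684466906446154125000000000 * s^8 + 327039182476615000000000000 * s^9 + 119513923527363750000000000 * s^10 + 32864760085500000000000000 * s^11 + 6591975726875000000000000 * s^12 + 911475337500000000000000 * s^13 + 77753812500000000000000 * s^14 + 3087000000000000000000 * s^15) * (1 + x)^0 * (1 - x)^5 + (1772131786285315237884375 + 12892430472199139405062500 * s + 43451753394864264550312500 * s^2 + 89803280753061362550000000 * s^3 + 126942576472959758437500000 * s^4 + 129565977460164708750000000 * s^5 + 98210467062913865625000000 * s^6 + 55961694098123625000000000 * s^7 + 23965473571436250000000000 * s^8 + 7616436066750000000000000 * s^9 + 1745683804593750000000000 * s^10 + 273200602500000000000000 * s^11 + 26162325000000000000000 * s^12 + 1157625000000000000000 * s^13) * (1 + x)^1 * (1 - x)^4 + (184584962009941875781250 + 1161689386333648265625000 * s + 3325326406679508984375000 * s^2 + 5715064172374648437500000 * s^3 + 6552777158376503906250000 * s^4 + 5263237291168828125000000 * s^5 + 3021990720555078125000000 * s^6 + 1240395371250000000000000 * s^7 + 356691624023437500000000 * s^8 + 68440558593750000000000 * s^9 + 7886320312500000000000 * s^10 + 413437500000000000000 * s^11) * (1 + x)^2 * (1 - x)^3 + (12199084793927363281250 + 62243325948882421875000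 * s + 141320061701314453125000 * s^2 + 187409602268164062500000 * s^3 + 159986852178808593750000 * s^4 + 91180611333984375000000 * s^5 + 34695295537109375000000 * s^6 + 8499930468750000000000 * s^7 + 1216625976562500000000 * s^8 + 77519531250000000000 * s^9) * (1 + x)^3 * (1 - x)^2 + (427365199621240234375 + 1673488418416992187500 * s + 2815531042221679687500 * s^2 + 2638579036132812500000 * s^3 + 1487722902832031250000 * s^4 + 504725361328125000000 * s^5 + 95406445312500000000 * s^6 + 7751953125000000000 * s^7) * (1 + x)^4 * (1 - x)^1 + (6216405208740234375 + 16983937133789062500 * s + 18680322875976562500 * s^2 + 10339526367187500000 * s^3 + 2880065917968750000 * s^4 + 322998046875000000 * s^5) * (1 + x)^5 * (1 - x)^0 \<ge> 0" by (rule bp[OF h1 h2])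
  moreover have "(1+x) \<ge> 0" using x0 x1 by simp
  ultimately have "16 * (DA s * BA s x - DB s * NA s x) \<ge> 0" unfolding id by simp
  then show ?thesis by (simp add: zero_le_mult_iff)
qed

lemma cheb: "cos (real n * t) = Tc n (cos t) \<and> sin (real n * t) = sin t * Uc n (cos t)
   \<and> cos (real (Suc n) * t) = Tc (Suc n) (cos t) \<and> sin (real (Suc n) * t) = sin t * Uc (Suc n) (cos t)"
proof (induction n)
  case 0 then show ?case by simp
next
  case (Suc n)
  have e1: "real (Suc (Suc n)) * t = real (Suc n) * t + t" by (simp add: algebra_simps)
  have e2: "real n * t = real (Suc n) * t - t" by (simp add: algebra_simps)
  have c2: "cos (real (Suc (Suc n)) * t) = 2 * cos t * cos (real (Suc n) * t) - cos (real n * t)"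
    unfolding e1 by (subst e2, simp only: cos_add cos_diff, simp add: algebra_simps)
  have s2: "sin (real (Suc (Suc n)) * t) = 2 * cos t * sin (real (Suc n) * t) - sin (real n * t)"
    unfolding e1 by (subst e2, simp only: sin_add sin_diff, simp add: algebra_simps)
  show ?case using Suc c2 s2 by (simp add: algebra_simps)
qed

lemma cheb': "cos (t * real n) = Tc n (cos t)" "sin (t * real n) = sin t * Uc n (cos t)"
  using cheb[of n t] by (simp_all add: mult.commute)

lemma tf: "(\<Sum>j<n. complex_of_real (w j) * cis (real j * t)) =
  Complex (\<Sum>j<n. w j * Tc j (cos t)) (sin t * (\<Sum>j<n. w j * Uc j (cos t)))"
  by (rule complex_eqI) (simp_all add: Re_sum Im_sum cheb' sum_distrib_left algebra_simps)

lemma tf_le: "(\<Sum>j\<le>n. complex_of_real (w j) * cis (real j * t)) =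
  Complex (\<Sum>j\<le>n. w j * Tc j (cos t)) (sin t * (\<Sum>j\<le>n. w j * Uc j (cos t)))"
  using tf[where n="Suc n" and w=w and t=t] by (simp add: lessThan_Suc_atMost)

lemma a_eq: "a_fun 7 g t = Complex (RA (g-11/5) (cos t) / 656250) (sin t * (IA (g-11/5) (cos t) / 656250))"
proof -
  have r: "(\<Sum>j<7. siems_a 7 g j * Tc j (cos t)) = RA (g-11/5) (cos t) / 656250"
    using RA_sx[of "g-11/5" "cos t"] by simp
  have i: "(\<Sum>j<7. siems_a 7 g j * Uc j (cos t)) = IA (g-11/5) (cos t) / 656250"
    using IA_sx[of "g-11/5" "cos t"] by simp
  show ?thesis unfolding a_fun_def tf r i ..
qed

lemma b_eq: "b_fun 7 g t = Complex (RB (g-11/5) (cos t) / 15625) (sin t * (IB (g-11/5) (cos t) / 15625))"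
proof -
  have r: "(\<Sum>j\<le>7. siems_b 7 g j * Tc j (cos t)) = RB (g-11/5) (cos t) / 15625"
    using RB_sx[of "g-11/5" "cos t"] by simp
  have i: "(\<Sum>j\<le>7. siems_b 7 g j * Uc j (cos t)) = IB (g-11/5) (cos t) / 15625"
    using IB_sx[of "g-11/5" "cos t"] by simp
  show ?thesis unfolding b_fun_def tf_le r i ..
qed

lemma c_eq: "c_fun 7 g t = Complex (RC (g-11/5) (cos t) / 15625) (sin t * (IC (g-11/5) (cos t) / 15625))"
proof -
  have r: "(\<Sum>j<7. siems_c 7 g j * Tc j (cos t)) = RC (g-11/5) (cos t) / 15625"
    using RC_sx[of "g-11/5" "cos t"] by simp
  have i: "(\<Sum>j<7. siems_c 7 g j * Uc j (cos t)) = IC (g-11/5) (cos t) / 15625"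
    using IC_sx[of "g-11/5" "cos t"] by simp
  show ?thesis unfolding c_fun_def tf r i ..
qed

lemma cmod_a_sq: "cmod (a_fun 7 g t)^2 = NA (g-11/5) (cos t) / 656250^2"
proof -
  have "cmod (a_fun 7 g t)^2 = (RA (g-11/5) (cos t)^2 + sin t^2 * IA (g-11/5) (cos t)^2) / 656250^2"
    unfolding a_eq cmod_power2 by (simp add: power_divide power_mult_distrib add_divide_distrib)
  also have "\<dots> = NA (g-11/5) (cos t) / 656250^2"
    unfolding sin_squared_eq NA_eq[symmetric] ..
  finally show ?thesis .
qed

lemma cmod_c_sq: "cmod (c_fun 7 g t)^2 = NC (g-11/5) (cos t) / 15625^2"
proof -
  have "cmod (c_fun 7 g t)^2 = (RC (g-11/5) (cos t)^2 + sin t^2 * IC (g-11/5) (cos t)^2) / 15625^2"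
    unfolding c_eq cmod_power2 by (simp add: power_divide power_mult_distrib add_divide_distrib)
  also have "\<dots> = NC (g-11/5) (cos t) / 15625^2"
    unfolding sin_squared_eq NC_eq[symmetric] ..
  finally show ?thesis .
qed

lemma Re_ba: "Re (b_fun 7 g t / a_fun 7 g t) = (BA (g-11/5) (cos t) / (15625 * 656250)) / (NA (g-11/5) (cos t) / 656250^2)"
proof -
  have n: "(Re (a_fun 7 g t))\<^sup>2 + (Im (a_fun 7 g t))\<^sup>2 = NA (g-11/5) (cos t) / 656250^2"
    using cmod_a_sq[of g t] unfolding cmod_power2 .
  have "Re (b_fun 7 g t) * Re (a_fun 7 g t) + Im (b_fun 7 g t) * Im (a_fun 7 g t)
      = (RB (g-11/5) (cos t) * RA (g-11/5) (cos t) + sin t^2 * IB (g-11/5) (cos t) * IA (g-11/5) (cos t)) / (15625 * 656250)"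
    unfolding a_eq b_eq by (simp add: power2_eq_square field_simps)
  also have "\<dots> = BA (g-11/5) (cos t) / (15625 * 656250)"
    unfolding sin_squared_eq BA_eq[symmetric] ..
  finally show ?thesis unfolding Re_divide n by simp
qed

lemma cmod_real0: "cmod (Complex r 0) = abs r"
  by (simp add: cmod_def)

lemma NA_ge: "0 \<le> s \<Longrightarrow> -1 \<le> x \<Longrightarrow> x \<le> 1 \<Longrightarrow> 430664062500 \<le> NA s x"
  using F_cert1[of s x] F_cert2[of s x] by (cases "x \<le> 0") auto

lemma RA1: "RA s 1 = 656250" unfolding RA_def by simp

lemma DA_pos: "0 \<le> s \<Longrightarrow> 0 < DA s"
  unfolding DA_def by (intro add_pos_nonneg mult_nonneg_nonneg zero_le_power; simp)
lemma DC_pos: "0 \<le> s \<Longrightarrow> 0 < DC s"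
  unfolding DC_def by (intro add_pos_nonneg mult_nonneg_nonneg zero_le_power; simp)

lemma DA_g: "DA (g-11/5) / 656250 = 16 * (420*g^6 - 1050*g^4 + 1400*g^3 - 840*g^2 + 252*g - 31) / 105"
  unfolding DA_def by algebra
lemma DB_g: "DB (g-11/5) / 15625 = (1 - 2*g)^6"
  unfolding DB_def by algebra
lemma DC_g: "DC (g-11/5) / 15625 = 64*g^6 + 192*g^5 - 240*g^4 + 160*g^3 - 60*g^2 + 12*g - 1"
  unfolding DC_def by algebra

theorem mainTheorem14:
  fixes \<gamma> :: real
  assumes "11/5 \<le> \<gamma>" and "\<gamma> \<le> 9"
  shows "sigma_F 7 \<gamma> = 1
    \<and> sigma_E 7 \<gamma> = cmod (c_fun 7 \<gamma> pi) / cmod (a_fun 7 \<gamma> pi)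
    \<and> lambda_I 7 \<gamma> = 105 * (1 - 2*\<gamma>)^6 /
        (16 * (420*\<gamma>^6 - 1050*\<gamma>^4 + 1400*\<gamma>^3 - 840*\<gamma>^2 + 252*\<gamma> - 31))
    \<and> I_IE 7 \<gamma> = (1 - 2*\<gamma>)^6 /
        (64*\<gamma>^6 + 192*\<gamma>^5 - 240*\<gamma>^4 + 160*\<gamma>^3 - 60*\<gamma>^2 + 12*\<gamma> - 1)"
proof -
  define s where "s = \<gamma> - 11/5"
  have s0: "0 \<le> s" using assms(1) unfolding s_def by simp
  define S where "S = {0..<2*pi}"
  have pi_in: "pi \<in> S" and z_in: "0 \<in> S" unfolding S_def using pi_gt_zero by auto
  define KA :: real where "KA = 656250"
  define KC :: real where "KC = 15625"
  have DApos: "0 < DA s" by (rule DA_pos[OF s0])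
  have DCpos: "0 < DC s" by (rule DC_pos[OF s0])
  have NAge: "430664062500 \<le> NA s (cos t)" for t
    using NA_ge[OF s0, of "cos t"] by simp
  have NApos: "0 < NA s (cos t)" for t using NAge[of t] by linarith
  have cmod_a: "cmod (a_fun 7 \<gamma> t)^2 = NA s (cos t) / KA^2" for t
    unfolding KA_def s_def by (rule cmod_a_sq)
  have cmod_c: "cmod (c_fun 7 \<gamma> t)^2 = NC s (cos t) / KC^2" for t
    unfolding KC_def s_def by (rule cmod_c_sq)
  have a_ge1: "1 \<le> cmod (a_fun 7 \<gamma> t)" for t
  proof -
    have "1 \<le> cmod (a_fun 7 \<gamma> t)^2" unfolding cmod_a KA_def using NAge[of t] by simp
    then show ?thesis using power2_le_imp_le[of 1 "cmod (a_fun 7 \<gamma> t)"] by simp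
  qed
  have a_pi: "a_fun 7 \<gamma> pi = Complex (DA s / KA) 0"
    unfolding a_eq KA_def s_def DA_eq[symmetric] by simp
  have b_pi: "b_fun 7 \<gamma> pi = Complex (DB s / KC) 0"
    unfolding b_eq KC_def s_def DB_eq[symmetric] by simp
  have c_pi: "c_fun 7 \<gamma> pi = Complex (DC s / KC) 0"
    unfolding c_eq KC_def s_def DC_eq[symmetric] by simp
  have a_0: "a_fun 7 \<gamma> 0 = 1"
    unfolding a_eq by (simp add: complex_eq_iff RA1)
  have cmod_api: "cmod (a_fun 7 \<gamma> pi) = DA s / KA" unfolding a_pi cmod_real0 using DApos by (simp add: KA_def)
  have cmod_cpi: "cmod (c_fun 7 \<gamma> pi) = DC s / KC" unfolding c_pi cmod_real0 using DCpos by (simp add: KC_def)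
  have sF: "sigma_F 7 \<gamma> = 1"
    unfolding sigma_F_def S_def[symmetric]
  proof (rule cSup_eq_maximum)
    show "1 \<in> (\<lambda>t. cmod (1 / a_fun 7 \<gamma> t)) ` S" using z_in a_0 by force
    fix y assume "y \<in> (\<lambda>t. cmod (1 / a_fun 7 \<gamma> t)) ` S"
    then obtain t where y: "y = cmod (1 / a_fun 7 \<gamma> t)" by auto
    have "cmod (1 / a_fun 7 \<gamma> t) = 1 / cmod (a_fun 7 \<gamma> t)" by (simp add: norm_divide)
    also have "\<dots> \<le> 1" using a_ge1[of t] by (simp add: divide_le_eq)
    finally show "y \<le> 1" using y by simp
  qed
  define E0 where "E0 = cmod (c_fun 7 \<gamma> pi) / cmod (a_fun 7 \<gamma> pi)"
  have E0_eq: "E0 = (DC s / KC) / (DA s / KA)" unfolding E0_def cmod_api cmod_cpi ..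
  have E_le: "cmod (c_fun 7 \<gamma> t / a_fun 7 \<gamma> t) \<le> E0" for t
  proof -
    have x0: "-1 \<le> cos t" and x1: "cos t \<le> 1" by simp_all
    have ce: "0 \<le> DC s^2 * NA s (cos t) - DA s^2 * NC s (cos t)" using E_cert[OF s0 x0 x1] by simp
    have "cmod (c_fun 7 \<gamma> t / a_fun 7 \<gamma> t)^2 = (NC s (cos t) / KC^2) / (NA s (cos t) / KA^2)"
      by (simp add: norm_divide power_divide cmod_a cmod_c)
    also have "\<dots> \<le> ((DC s / KC) / (DA s / KA))^2"
      using ce NApos[of t] DApos by (simp add: field_simps KA_def KC_def)
    finally have "cmod (c_fun 7 \<gamma> t / a_fun 7 \<gamma> t)^2 \<le> E0^2" unfolding E0_eq .
    moreover have "0 \<le> E0" unfolding E0_def by simp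
    ultimately show ?thesis by (rule power2_le_imp_le)
  qed
  have sE: "sigma_E 7 \<gamma> = E0"
    unfolding sigma_E_def S_def[symmetric]
  proof (rule cSup_eq_maximum)
    show "E0 \<in> (\<lambda>t. cmod (c_fun 7 \<gamma> t / a_fun 7 \<gamma> t)) ` S" unfolding E0_def using pi_in by (simp add: norm_divide)
    fix y assume "y \<in> (\<lambda>t. cmod (c_fun 7 \<gamma> t / a_fun 7 \<gamma> t)) ` S"
    then show "y \<le> E0" using E_le by auto
  qed
  define L0 where "L0 = (DB s / KC) / (DA s / KA)"
  have L_ge: "L0 \<le> Re (b_fun 7 \<gamma> t / a_fun 7 \<gamma> t)" for t
  proof -
    have x0: "-1 \<le> cos t" and x1: "cos t \<le> 1" by simp_all
    have ie: "0 \<le> DA s * BA s (cos t) - DB s * NA s (cos t)" using I_cert[OF s0 x0 x1] by simp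
    have "Re (b_fun 7 \<gamma> t / a_fun 7 \<gamma> t) = (BA s (cos t) / (KC * KA)) / (NA s (cos t) / KA^2)"
      unfolding Re_ba s_def KA_def KC_def ..
    moreover have "L0 \<le> (BA s (cos t) / (KC * KA)) / (NA s (cos t) / KA^2)"
      unfolding L0_def using ie NApos[of t] DApos by (simp add: field_simps KA_def KC_def power2_eq_square)
    ultimately show ?thesis by simp
  qed
  have L_pi: "Re (b_fun 7 \<gamma> pi / a_fun 7 \<gamma> pi) = L0"
    unfolding a_pi b_pi L0_def by (simp add: Re_divide power2_eq_square)
  have sL: "lambda_I 7 \<gamma> = L0"
    unfolding lambda_I_def S_def[symmetric]
  proof (rule cInf_eq_minimum)
    show "L0 \<in> (\<lambda>t. Re (b_fun 7 \<gamma> t / a_fun 7 \<gamma> t)) ` S" using pi_in L_pi by force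
    fix y assume "y \<in> (\<lambda>t. Re (b_fun 7 \<gamma> t / a_fun 7 \<gamma> t)) ` S"
    then show "L0 \<le> y" using L_ge by auto
  qed
  have dA: "DA s / KA = 16 * (420*\<gamma>^6 - 1050*\<gamma>^4 + 1400*\<gamma>^3 - 840*\<gamma>^2 + 252*\<gamma> - 31) / 105"
    unfolding s_def KA_def by (rule DA_g)
  have dB: "DB s / KC = (1 - 2*\<gamma>)^6" unfolding s_def KC_def by (rule DB_g)
  have dC: "DC s / KC = 64*\<gamma>^6 + 192*\<gamma>^5 - 240*\<gamma>^4 + 160*\<gamma>^3 - 60*\<gamma>^2 + 12*\<gamma> - 1"
    unfolding s_def KC_def by (rule DC_g)
  have dApos: "0 < DA s / KA" using DApos by (simp add: KA_def)
  have dCpos: "0 < DC s / KC" using DCpos by (simp add: KC_def)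
  have lam: "L0 = 105 * (1 - 2*\<gamma>)^6 /
        (16 * (420*\<gamma>^6 - 1050*\<gamma>^4 + 1400*\<gamma>^3 - 840*\<gamma>^2 + 252*\<gamma> - 31))"
    unfolding L0_def dA dB by simp
  have iie: "I_IE 7 \<gamma> = (1 - 2*\<gamma>)^6 /
        (64*\<gamma>^6 + 192*\<gamma>^5 - 240*\<gamma>^4 + 160*\<gamma>^3 - 60*\<gamma>^2 + 12*\<gamma> - 1)"
  proof -
    have "I_IE 7 \<gamma> = L0 / E0" unfolding I_IE_def sL sE ..
    also have "\<dots> = (DB s / KC) / (DC s / KC)" unfolding L0_def E0_eq using DApos by (simp add: KA_def KC_def)
    also have "\<dots> = (1 - 2*\<gamma>)^6 / (64*\<gamma>^6 + 192*\<gamma>^5 - 240*\<gamma>^4 + 160*\<gamma>^3 - 60*\<gamma>^2 + 12*\<gamma> - 1)"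
      unfolding dB dC ..
    finally show ?thesis .
  qed
  show ?thesis using sF sE lam iie sL unfolding E0_def by simp
qed

end
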